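(* Consider a general state space model as described in the context, with observations $y_1,y_2,\dots$ held fixed, and the i.i.d. Monte Carlo filter $f^N_{t|t}$. Assume that the state space is compact, that the transition densities do not depend on $t$, $a_t=a$ for all $t\ge 1$, and that there exist a probability density $h$ and constants $0<c_a\le C_a<\infty$ such that (i) $c_a h(x)\le a(x',x)\le C_a h(x)$ for all $x,x'$; (ii) $0<\int b_t(x,y_t)h(x)\,d\mu(x)<\infty$ for all $t$ and all $y_t$; (iii) $\Delta(x',x):=\sup_{x''}\frac{|a(x,x'')-a(x',x'')|}{h(x'')}\to0$ as $d(x,x')\to0$. Then for every $\varepsilon>0$ there are constants $c_1,c_2$ such that for all $t$ and all $N$, $$\mathbf P\big[\|f^N_{t|t}-f_{t|t}\|_1>\varepsilon\big]\le c_1\exp(-c_2N).$$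
   Context: State space model: the state space $E$ is a complete separable metric space (metric $d$) with Borel $\sigma$-field and a reference measure $\mu$; observation space with measure $\nu$. $(X_t)$ is a Markov chain with $X_0\sim a_0\,d\mu$ and $X_t\mid X_{t-1}=x'\sim a_t(x',x)\,d\mu(x)$; conditionally on $(X_t)$ the $Y_t$ are independent with $Y_t\mid X_t=x\sim b_t(x,y)\,d\nu(y)$. With observations fixed, $f_{t|t}$ is the conditional density of $X_t$ given $Y_{1:t}=y_{1:t}$: $f_{0|0}=a_0$, $f_{t|t}(x)\propto b_t(x,y_t)\int f_{t-1|t-1}(x')a_t(x',x)\,d\mu(x')$. Monte Carlo filter: $x_{1,0},\dots,x_{N,0}$ i.i.d. from $f^N_{0|0}=a_0$; given the particles up to time $t-1$, $x_{1,t},\dots,x_{N,t}$ are i.i.d. from $f^N_{t|t}(x)\propto b_t(x,y_t)\frac1N\sum_{j=1}^N a_t(x_{j,t-1},x)$. $\|\cdot\|_1$ is the $L_1(\mu)$ norm; probabilities refer only to the Monte Carlo randomness. *)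

theory Defs
  imports "HOL-Probability.Probability"
begin

definition normalize :: "'a measure \<Rightarrow> ('a \<Rightarrow> real) \<Rightarrow> 'a \<Rightarrow> real" where
  "normalize \<mu> g x = g x / enn2real (\<integral>\<^sup>+ z. ennreal (g z) \<partial>\<mu>)"

definition L1_dist :: "'a measure \<Rightarrow> ('a \<Rightarrow> real) \<Rightarrow> ('a \<Rightarrow> real) \<Rightarrow> ennreal" where
  "L1_dist \<mu> f g = (\<integral>\<^sup>+ x. ennreal \<bar>f x - g x\<bar> \<partial>\<mu>)"

fun filt :: "'a measure \<Rightarrow> ('a \<Rightarrow> real) \<Rightarrow> ('a \<Rightarrow> 'a \<Rightarrow> real) \<Rightarrow> (nat \<Rightarrow> 'a \<Rightarrow> 'b \<Rightarrow> real)
              \<Rightarrow> (nat \<Rightarrow> 'b) \<Rightarrow> nat \<Rightarrow> 'a \<Rightarrow> real" where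
  "filt \<mu> a0 a b y 0 = a0"
| "filt \<mu> a0 a b y (Suc t) =
     normalize \<mu> (\<lambda>x. b (Suc t) x (y (Suc t)) *
        enn2real (\<integral>\<^sup>+ x'. ennreal (filt \<mu> a0 a b y t x' * a x' x) \<partial>\<mu>))"

text \<open>Monte Carlo filter density f^N_{t|t}, as a function of the particle vector
  p = (x_{1,t-1},...,x_{N,t-1}) (indices 0..N-1). For t = 0 it is a0 and does not depend on p.\<close>
definition mc_dens :: "'a measure \<Rightarrow> ('a \<Rightarrow> real) \<Rightarrow> ('a \<Rightarrow> 'a \<Rightarrow> real) \<Rightarrow> (nat \<Rightarrow> 'a \<Rightarrow> 'b \<Rightarrow> real)
              \<Rightarrow> (nat \<Rightarrow> 'b) \<Rightarrow> nat \<Rightarrow> nat \<Rightarrow> (nat \<Rightarrow> 'a) \<Rightarrow> 'a \<Rightarrow> real" where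
  "mc_dens \<mu> a0 a b y N t p =
     (if t = 0 then a0
      else normalize \<mu> (\<lambda>x. b t x (y t) * ((1 / real N) * (\<Sum>j<N. a (p j) x))))"

text \<open>Law of the particle vector (x_{1,t},...,x_{N,t}) under the Monte Carlo randomness:
  i.i.d. from a0 at time 0; given the particles at time t, i.i.d. from f^N_{t+1|t+1}.\<close>
fun particles :: "'a measure \<Rightarrow> ('a \<Rightarrow> real) \<Rightarrow> ('a \<Rightarrow> 'a \<Rightarrow> real) \<Rightarrow> (nat \<Rightarrow> 'a \<Rightarrow> 'b \<Rightarrow> real)
              \<Rightarrow> (nat \<Rightarrow> 'b) \<Rightarrow> nat \<Rightarrow> nat \<Rightarrow> (nat \<Rightarrow> 'a) measure" where
  "particles \<mu> a0 a b y N 0 = (\<Pi>\<^sub>M j\<in>{..<N}. density \<mu> (\<lambda>x. ennreal (a0 x)))"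
| "particles \<mu> a0 a b y N (Suc t) =
     particles \<mu> a0 a b y N t \<bind>
       (\<lambda>p. \<Pi>\<^sub>M j\<in>{..<N}. density \<mu> (\<lambda>x. ennreal (mc_dens \<mu> a0 a b y N (Suc t) p x)))"

text \<open>Since f^N_{t|t} is a function of the particles at
  time t-1, the probability is taken under the law of those particles; for t = 0 the event is
  deterministic (f^N_{0|0} = a0) and the law used (that of the time-0 particles) is irrelevant.\<close>
definition mc_error_prob :: "'a measure \<Rightarrow> ('a \<Rightarrow> real) \<Rightarrow> ('a \<Rightarrow> 'a \<Rightarrow> real) \<Rightarrow> (nat \<Rightarrow> 'a \<Rightarrow> 'b \<Rightarrow> real)
              \<Rightarrow> (nat \<Rightarrow> 'b) \<Rightarrow> nat \<Rightarrow> nat \<Rightarrow> real \<Rightarrow> real" where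
  "mc_error_prob \<mu> a0 a b y N t \<epsilon> =
     measure (particles \<mu> a0 a b y N (t - 1))
       {p \<in> space (particles \<mu> a0 a b y N (t - 1)).
          L1_dist \<mu> (mc_dens \<mu> a0 a b y N t p) (filt \<mu> a0 a b y t) > ennreal \<epsilon>}"

end

theory Submission
  imports Defs
begin


lemma emeasure_le_nn_integral_indicator:
  "emeasure M A \<le> (\<integral>\<^sup>+ x. indicator A x \<partial>M)"
proof (cases "A \<in> sets M")
  case True then show ?thesis by simp
next
  case False then show ?thesis by (simp add: emeasure_notin_sets)
qed

lemma nn_integral_bind_le:
  assumes N: "K \<in> measurable M (subprob_algebra B)"
  shows "(\<integral>\<^sup>+x. f x \<partial>(M \<bind> K)) \<le> (\<integral>\<^sup>+z. \<integral>\<^sup>+y. f y \<partial>K z \<partial>M)"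
proof (cases "space M = {}")
  case True
  then have "M \<bind> K = count_space {}" by (simp add: bind_empty)
  then show ?thesis by (simp add: nn_integral_empty)
next
  case M: False
  have sb: "sets (M \<bind> K) = sets B"
    using M N by (auto intro!: sets_bind dest: sets_kernel)
  show ?thesis
    unfolding nn_integral_def[of "M \<bind> K" f]
  proof (rule SUP_least)
    fix g assume g: "g \<in> {g. simple_function (M \<bind> K) g \<and> g \<le> f}"
    then have gm: "g \<in> borel_measurable B"
      using borel_measurable_simple_function measurable_cong_sets[OF sb refl] by blast
    have "integral\<^sup>S (M \<bind> K) g = (\<integral>\<^sup>+x. g x \<partial>(M \<bind> K))"
      using g by (simp add: nn_integral_eq_simple_integral)
    also have "\<dots> = (\<integral>\<^sup>+z. \<integral>\<^sup>+y. g y \<partial>K z \<partial>M)"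
      by (rule nn_integral_bind[OF gm N])
    also have "\<dots> \<le> (\<integral>\<^sup>+z. \<integral>\<^sup>+y. f y \<partial>K z \<partial>M)"
      using g by (intro nn_integral_mono) (auto simp: le_fun_def)
    finally show "integral\<^sup>S (M \<bind> K) g \<le> (\<integral>\<^sup>+z. \<integral>\<^sup>+y. f y \<partial>K z \<partial>M)" .
  qed
qed

lemma nn_integral_add_const_le:
  fixes c :: ennreal
  assumes "c < \<infinity>"
  shows "(\<integral>\<^sup>+x. c + f x \<partial>M) \<le> c * emeasure M (space M) + (\<integral>\<^sup>+x. f x \<partial>M)"
  unfolding nn_integral_def[of M "\<lambda>x. c + f x"]
proof (rule SUP_least)
  fix g assume g: "g \<in> {g. simple_function M g \<and> g \<le> (\<lambda>x. c + f x)}"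
  define g' where "g' = (\<lambda>x. g x - c)"
  have sg: "simple_function M g" using g by simp
  have sg': "simple_function M g'"
    unfolding g'_def using sg by (rule simple_function_compose1)
  have le: "g x \<le> c + g' x" for x
    unfolding g'_def using ennreal_minus_le_iff by blast
  have g'f: "g' x \<le> f x" for x
    using g assms unfolding g'_def le_fun_def
    by (auto simp: ennreal_minus_le_iff)
  have "integral\<^sup>S M g = (\<integral>\<^sup>+x. g x \<partial>M)"
    using sg by (simp add: nn_integral_eq_simple_integral)
  also have "\<dots> \<le> (\<integral>\<^sup>+x. c + g' x \<partial>M)"
    using le by (intro nn_integral_mono) auto
  also have "\<dots> = (\<integral>\<^sup>+x. c \<partial>M) + (\<integral>\<^sup>+x. g' x \<partial>M)"
    using sg' by (intro nn_integral_add) (auto dest: borel_measurable_simple_function)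
  also have "\<dots> \<le> c * emeasure M (space M) + (\<integral>\<^sup>+x. f x \<partial>M)"
    using g'f by (intro add_mono nn_integral_mono) auto
  finally show "integral\<^sup>S M g \<le> c * emeasure M (space M) + (\<integral>\<^sup>+x. f x \<partial>M)" .
qed



definition Rel :: "('a \<Rightarrow> real) \<Rightarrow> ('a \<Rightarrow> real) \<Rightarrow> real \<Rightarrow> bool" where
  "Rel F G L \<longleftrightarrow> (\<exists>m>0. \<forall>x. m * G x \<le> F x \<and> F x \<le> L * m * G x)"

locale ssm =
  fixes \<mu> :: "'a::polish_space measure" and \<nu> :: "'b measure"
    and a0 h :: "'a \<Rightarrow> real" and a :: "'a \<Rightarrow> 'a \<Rightarrow> real"
    and b :: "nat \<Rightarrow> 'a \<Rightarrow> 'b \<Rightarrow> real" and y :: "nat \<Rightarrow> 'b"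
    and c_a C_a :: real
  assumes sets_mu: "sets \<mu> = sets borel"
    and sigma_finite_mu: "sigma_finite_measure \<mu>"
    and a0_meas: "a0 \<in> borel_measurable borel"
    and a0_nonneg: "\<And>x. 0 \<le> a0 x"
    and a0_prob: "(\<integral>\<^sup>+ x. ennreal (a0 x) \<partial>\<mu>) = 1"
    and a_meas: "(\<lambda>z. a (fst z) (snd z)) \<in> borel_measurable (borel \<Otimes>\<^sub>M borel)"
    and a_nonneg: "\<And>x' x. 0 \<le> a x' x"
    and a_prob: "\<And>x'. (\<integral>\<^sup>+ x. ennreal (a x' x) \<partial>\<mu>) = 1"
    and b_meas: "\<And>t. (\<lambda>z. b t (fst z) (snd z)) \<in> borel_measurable (borel \<Otimes>\<^sub>M \<nu>)"
    and b_nonneg: "\<And>t x v. 0 \<le> b t x v"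
    and y_in: "\<And>t. y t \<in> space \<nu>"
    and h_meas: "h \<in> borel_measurable borel"
    and h_nonneg: "\<And>x. 0 \<le> h x"
    and ca_bounds: "0 < c_a" "c_a \<le> C_a"
    and cond_i: "\<And>x' x. c_a * h x \<le> a x' x \<and> a x' x \<le> C_a * h x"
    and cond_ii: "\<And>t v. t \<ge> 1 \<Longrightarrow> v \<in> space \<nu> \<Longrightarrow>
                    0 < (\<integral>\<^sup>+ x. ennreal (b t x v * h x) \<partial>\<mu>) \<and>
                    (\<integral>\<^sup>+ x. ennreal (b t x v * h x) \<partial>\<mu>) < \<infinity>"
begin

sublocale sf: sigma_finite_measure \<mu> by (rule sigma_finite_mu)

declare sets_mu[measurable_cong]

lemma a_m[measurable]: "(\<lambda>(x', x). a x' x) \<in> borel_measurable (borel \<Otimes>\<^sub>M borel)"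
  using a_meas by (simp add: case_prod_beta')

lemma b_m[measurable]: "(\<lambda>x. b s x (y s)) \<in> borel_measurable borel"
proof -
  have "(\<lambda>(x, v). b s x v) \<in> borel_measurable (borel \<Otimes>\<^sub>M \<nu>)"
    using b_meas by (simp add: case_prod_beta')
  moreover have "(\<lambda>x. y s) \<in> measurable borel \<nu>" using y_in by simp
  ultimately show ?thesis by measurable
qed

lemma h_m[measurable]: "h \<in> borel_measurable borel" by (rule h_meas)
lemma a0_m[measurable]: "a0 \<in> borel_measurable borel" by (rule a0_meas)

lemma C_pos: "0 < C_a" using ca_bounds by linarith

definition pred :: "('a \<Rightarrow> real) \<Rightarrow> 'a \<Rightarrow> real" where
  "pred G x = enn2real (\<integral>\<^sup>+ x'. ennreal (G x' * a x' x) \<partial>\<mu>)"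

definition Phi :: "nat \<Rightarrow> ('a \<Rightarrow> real) \<Rightarrow> 'a \<Rightarrow> real" where
  "Phi s G = normalize \<mu> (\<lambda>x. b s x (y s) * pred G x)"

definition dens :: "('a \<Rightarrow> real) \<Rightarrow> bool" where
  "dens F \<longleftrightarrow> F \<in> borel_measurable borel \<and> (\<forall>x. 0 \<le> F x) \<and> (\<integral>\<^sup>+ x. ennreal (F x) \<partial>\<mu>) = 1"

lemma dens_int:
  assumes "dens F" shows "integrable \<mu> F" "integral\<^sup>L \<mu> F = 1"
proof -
  have [measurable]: "F \<in> borel_measurable borel" using assms unfolding dens_def by auto
  have m: "F \<in> borel_measurable \<mu>" by measurable
  have "integrable \<mu> F \<and> integral\<^sup>L \<mu> F = 1"
    using assms m unfolding dens_def
    by (subst nn_integral_eq_integrable[symmetric]) auto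
  then show "integrable \<mu> F" "integral\<^sup>L \<mu> F = 1" by auto
qed

lemma pred_meas[measurable]:
  assumes [measurable]: "G \<in> borel_measurable borel"
  shows "pred G \<in> borel_measurable borel"
  unfolding pred_def by measurable

lemma pred_int:
  assumes "dens F"
  shows "integrable \<mu> (\<lambda>x'. F x' * a x' x)" "pred F x = (\<integral>x'. F x' * a x' x \<partial>\<mu>)"
proof -
  have [measurable]: "F \<in> borel_measurable borel" using assms unfolding dens_def by auto
  have F0: "\<And>x. 0 \<le> F x" using assms unfolding dens_def by auto
  show i: "integrable \<mu> (\<lambda>x'. F x' * a x' x)"
  proof (rule Bochner_Integration.integrable_bound[where f = "\<lambda>x'. (C_a * h x) * F x'"])
    show "integrable \<mu> (\<lambda>x'. (C_a * h x) * F x')" using dens_int[OF assms] by simp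
    show "(\<lambda>x'. F x' * a x' x) \<in> borel_measurable \<mu>" by measurable
    show "AE x' in \<mu>. norm (F x' * a x' x) \<le> norm ((C_a * h x) * F x')"
      using cond_i F0 a_nonneg h_nonneg C_pos
      by (auto intro!: AE_I2 mult_left_mono simp: abs_mult mult.commute)
  qed
  have "(\<integral>\<^sup>+ x'. ennreal (F x' * a x' x) \<partial>\<mu>) = ennreal (\<integral>x'. F x' * a x' x \<partial>\<mu>)"
    using i F0 a_nonneg by (intro nn_integral_eq_integral) auto
  moreover have "0 \<le> (\<integral>x'. F x' * a x' x \<partial>\<mu>)"
    using F0 a_nonneg by (intro integral_nonneg_AE) auto
  ultimately show "pred F x = (\<integral>x'. F x' * a x' x \<partial>\<mu>)"
    unfolding pred_def by simp
qed

lemma pred_bounds: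
  assumes "dens F"
  shows "c_a * h x \<le> pred F x" "pred F x \<le> C_a * h x"
proof -
  have F0: "\<And>x. 0 \<le> F x" using assms unfolding dens_def by auto
  note I = dens_int[OF assms]
  have "c_a * h x = (\<integral>x'. (c_a * h x) * F x' \<partial>\<mu>)" using I by simp
  also have "\<dots> \<le> (\<integral>x'. F x' * a x' x \<partial>\<mu>)"
    using I pred_int[OF assms] cond_i F0
    by (intro integral_mono) (auto simp: mult.commute intro!: mult_left_mono)
  finally show "c_a * h x \<le> pred F x" using pred_int[OF assms] by simp
  have "(\<integral>x'. F x' * a x' x \<partial>\<mu>) \<le> (\<integral>x'. (C_a * h x) * F x' \<partial>\<mu>)"
    using I pred_int[OF assms] cond_i F0
    by (intro integral_mono) (auto simp: mult.commute intro!: mult_left_mono)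
  also have "\<dots> = C_a * h x" using I by simp
  finally show "pred F x \<le> C_a * h x" using pred_int[OF assms] by simp
qed

end



lemma Rel_refl: "(\<And>x. 0 \<le> F x) \<Longrightarrow> 1 \<le> L \<Longrightarrow> Rel F F L"
  unfolding Rel_def
proof (intro exI[of _ 1] conjI allI)
  fix x assume "\<And>x. 0 \<le> F x" "1 \<le> L"
  then show "F x \<le> L * 1 * F x" using mult_right_mono[of 1 L "F x"] by simp
qed auto

lemma Rel_trans:
  assumes "Rel F G L1" "Rel G H L2" "\<And>x. 0 \<le> H x" "0 \<le> L1"
  shows "Rel F H (L1 * L2)"
proof -
  obtain m1 where m1: "m1 > 0" "\<And>x. m1 * G x \<le> F x \<and> F x \<le> L1 * m1 * G x"
    using assms(1) unfolding Rel_def by blast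
  obtain m2 where m2: "m2 > 0" "\<And>x. m2 * H x \<le> G x \<and> G x \<le> L2 * m2 * H x"
    using assms(2) unfolding Rel_def by blast
  show ?thesis unfolding Rel_def
  proof (intro exI[of _ "m1 * m2"] conjI allI)
    show "0 < m1 * m2" using m1 m2 by simp
    fix x
    have "m1 * m2 * H x = m1 * (m2 * H x)" by simp
    also have "\<dots> \<le> m1 * G x" using m1(1) m2(2)[of x] by (intro mult_left_mono) auto
    also have "\<dots> \<le> F x" using m1(2)[of x] by simp
    finally show "m1 * m2 * H x \<le> F x" .
    have "F x \<le> L1 * m1 * G x" using m1(2)[of x] by simp
    also have "\<dots> \<le> L1 * m1 * (L2 * m2 * H x)"
      using m1(1) m2(2)[of x] assms(4) by (intro mult_left_mono) auto
    finally show "F x \<le> L1 * L2 * (m1 * m2) * H x" by (simp add: mult_ac)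
  qed
qed

context ssm
begin

lemma norm_props:
  assumes s: "1 \<le> s" and U[measurable]: "U \<in> borel_measurable borel"
    and Ub: "\<And>x. c_a * h x \<le> U x \<and> U x \<le> C_a * h x"
  obtains Z where "0 < Z" "(\<integral>\<^sup>+ x. ennreal (b s x (y s) * U x) \<partial>\<mu>) = ennreal Z"
    "\<And>x. normalize \<mu> (\<lambda>x. b s x (y s) * U x) x = b s x (y s) * U x / Z"
proof -
  let ?I = "\<integral>\<^sup>+ x. ennreal (b s x (y s) * h x) \<partial>\<mu>"
  let ?J = "\<integral>\<^sup>+ x. ennreal (b s x (y s) * U x) \<partial>\<mu>"
  have ii: "0 < ?I" "?I < \<infinity>" using cond_ii[OF s y_in] by auto
  have "(\<integral>\<^sup>+ x. ennreal c_a * ennreal (b s x (y s) * h x) \<partial>\<mu>) \<le> ?J"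
  proof (intro nn_integral_mono)
    fix x
    have "b s x (y s) * (c_a * h x) \<le> b s x (y s) * U x"
      using Ub[of x] b_nonneg[of s x "y s"] by (intro mult_left_mono) auto
    then have "c_a * (b s x (y s) * h x) \<le> b s x (y s) * U x" by (simp add: mult_ac)
    then show "ennreal c_a * ennreal (b s x (y s) * h x) \<le> ennreal (b s x (y s) * U x)"
      using ca_bounds b_nonneg[of s x "y s"] h_nonneg[of x]
      by (simp add: ennreal_mult[symmetric] ennreal_leI)
  qed
  also have "(\<integral>\<^sup>+ x. ennreal c_a * ennreal (b s x (y s) * h x) \<partial>\<mu>) = ennreal c_a * ?I"
    by (rule nn_integral_cmult) measurable
  finally have J1: "ennreal c_a * ?I \<le> ?J" .
  have "?J \<le> (\<integral>\<^sup>+ x. ennreal C_a * ennreal (b s x (y s) * h x) \<partial>\<mu>)"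
  proof (intro nn_integral_mono)
    fix x
    have "b s x (y s) * U x \<le> b s x (y s) * (C_a * h x)"
      using Ub[of x] b_nonneg[of s x "y s"] by (intro mult_left_mono) auto
    then have "b s x (y s) * U x \<le> C_a * (b s x (y s) * h x)" by (simp add: mult_ac)
    then show "ennreal (b s x (y s) * U x) \<le> ennreal C_a * ennreal (b s x (y s) * h x)"
      using C_pos b_nonneg[of s x "y s"] h_nonneg[of x]
      by (simp add: ennreal_mult[symmetric] ennreal_leI)
  qed
  also have "\<dots> = ennreal C_a * ?I"
    by (rule nn_integral_cmult) measurable
  finally have J2: "?J \<le> ennreal C_a * ?I" .
  have Jpos: "0 < ?J"
  proof -
    have "0 < ennreal c_a * ?I" using ca_bounds ii(1) by (simp add: ennreal_zero_less_mult_iff)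
    then show ?thesis using J1 by (rule order_less_le_trans)
  qed
  have Jfin: "?J < \<infinity>"
  proof -
    have "ennreal C_a * ?I < \<infinity>" using ii(2) by (simp add: ennreal_mult_less_top)
    then show ?thesis by (rule order_le_less_trans[OF J2])
  qed
  define Z where "Z = enn2real ?J"
  have Z: "?J = ennreal Z" using Jfin unfolding Z_def by (simp add: less_top)
  have Zpos: "0 < Z" unfolding Z_def using Jpos Jfin by (simp add: enn2real_positive_iff)
  show ?thesis
  proof (rule that[OF Zpos Z])
    fix x show "normalize \<mu> (\<lambda>x. b s x (y s) * U x) x = b s x (y s) * U x / Z"
      unfolding normalize_def Z_def by simp
  qed
qed

lemma norm_dens:
  assumes s: "1 \<le> s" and U[measurable]: "U \<in> borel_measurable borel"
    and Ub: "\<And>x. c_a * h x \<le> U x \<and> U x \<le> C_a * h x"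
  shows "dens (normalize \<mu> (\<lambda>x. b s x (y s) * U x))"
proof -
  obtain Z where Z: "0 < Z" "(\<integral>\<^sup>+ x. ennreal (b s x (y s) * U x) \<partial>\<mu>) = ennreal Z"
    "\<And>x. normalize \<mu> (\<lambda>x. b s x (y s) * U x) x = b s x (y s) * U x / Z"
    using norm_props[OF assms] by blast
  have eq: "normalize \<mu> (\<lambda>x. b s x (y s) * U x) = (\<lambda>x. b s x (y s) * U x / Z)"
    using Z(3) by auto
  have U0: "0 \<le> U x" for x using Ub[of x] ca_bounds h_nonneg[of x]
    by (meson mult_nonneg_nonneg order.strict_implies_order order_trans)
  have "(\<integral>\<^sup>+ x. ennreal (b s x (y s) * U x / Z) \<partial>\<mu>) = (\<integral>\<^sup>+ x. ennreal (b s x (y s) * U x) * ennreal (1 / Z) \<partial>\<mu>)"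
    using Z(1) b_nonneg U0 by (intro nn_integral_cong) (simp add: ennreal_mult[symmetric])
  also have "\<dots> = ennreal Z * ennreal (1 / Z)"
    apply (subst nn_integral_multc)
     apply measurable
    apply (simp add: Z(2))
    done
  also have "\<dots> = 1" using Z(1) by (simp add: ennreal_mult[symmetric])
  finally show ?thesis
    unfolding dens_def eq using Z(1) b_nonneg U0 by (auto intro!: divide_nonneg_pos)
qed

lemma Phi_dens: "1 \<le> s \<Longrightarrow> dens G \<Longrightarrow> dens (Phi s G)"
  unfolding Phi_def
  by (rule norm_dens) (use pred_bounds in \<open>auto simp: dens_def\<close>)

lemma filt_Suc: "filt \<mu> a0 a b y (Suc t) = Phi (Suc t) (filt \<mu> a0 a b y t)"
  by (simp add: Phi_def pred_def)

lemma filt_dens: "dens (filt \<mu> a0 a b y t)"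
proof (induction t)
  case 0 then show ?case using a0_nonneg a0_prob by (simp add: dens_def)
next
  case (Suc t) then show ?case unfolding filt_Suc by (intro Phi_dens) auto
qed

lemma norm_rel:
  assumes s: "1 \<le> s" and U[measurable]: "U \<in> borel_measurable borel"
    and Ub: "\<And>x. c_a * h x \<le> U x \<and> U x \<le> C_a * h x"
    and V[measurable]: "V \<in> borel_measurable borel"
    and Vb: "\<And>x. c_a * h x \<le> V x \<and> V x \<le> C_a * h x"
    and m: "0 < m" "\<And>x. m * V x \<le> U x \<and> U x \<le> L * m * V x"
  shows "Rel (normalize \<mu> (\<lambda>x. b s x (y s) * U x)) (normalize \<mu> (\<lambda>x. b s x (y s) * V x)) L"
proof -
  obtain ZU where ZU: "0 < ZU" "\<And>x. normalize \<mu> (\<lambda>x. b s x (y s) * U x) x = b s x (y s) * U x / ZU"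
    using norm_props[OF s U Ub] by blast
  obtain ZV where ZV: "0 < ZV" "\<And>x. normalize \<mu> (\<lambda>x. b s x (y s) * V x) x = b s x (y s) * V x / ZV"
    using norm_props[OF s V Vb] by blast
  show ?thesis unfolding Rel_def ZU(2) ZV(2)
  proof (intro exI[of _ "m * ZV / ZU"] conjI allI)
    show "0 < m * ZV / ZU" using m ZU ZV by simp
    fix x
    let ?b = "b s x (y s)"
    have b0: "0 \<le> ?b" by (rule b_nonneg)
    have "m * ZV / ZU * (?b * V x / ZV) = ?b * (m * V x) / ZU" using ZV(1) by (simp add: field_simps)
    also have "\<dots> \<le> ?b * U x / ZU" using m(2)[of x] b0 ZU(1)
      by (intro divide_right_mono mult_left_mono) auto
    finally show "m * ZV / ZU * (?b * V x / ZV) \<le> ?b * U x / ZU" .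
    have "?b * U x / ZU \<le> ?b * (L * m * V x) / ZU" using m(2)[of x] b0 ZU(1)
      by (intro divide_right_mono mult_left_mono) auto
    also have "\<dots> = L * (m * ZV / ZU) * (?b * V x / ZV)" using ZV(1) by (simp add: field_simps)
    finally show "?b * U x / ZU \<le> L * (m * ZV / ZU) * (?b * V x / ZV)" .
  qed
qed

end


lemma L_ge1:
  fixes m L :: real
  assumes "0 < m" "m \<le> 1" "1 \<le> L*m"
  shows "1 \<le> L"
proof -
  have L0: "0 \<le> L"
  proof (rule ccontr)
    assume "\<not> 0 \<le> L" then have "L*m < 0" using assms(1) by (simp add: mult_neg_pos)
    then show False using assms(3) by linarith
  qed
  have "L*m \<le> L" using mult_left_mono[of m 1 L] assms L0 by simp
  then show ?thesis using assms by linarith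
qed

lemma aux_abs:
  fixes f g m L :: real
  assumes "0 < m" "m \<le> 1" "1 \<le> L*m" "0 \<le> g" "m*g \<le> f" "f \<le> L*m*g"
  shows "\<bar>f - g\<bar> \<le> (L-1)*g"
proof -
  have L0: "0 \<le> L"
  proof (rule ccontr)
    assume "\<not> 0 \<le> L" then have "L*m < 0" using assms(1) by (simp add: mult_neg_pos)
    then show False using assms(3) by linarith
  qed
  have "L*m \<le> L" using mult_left_mono[of m 1 L] assms L0 by simp
  then have L1: "1 \<le> L" using assms by linarith
  have "(L-1)*m \<le> (L-1)*1" using mult_left_mono[of m 1 "L-1"] assms L1 by simp
  then have "1 - m \<le> L - 1" using assms by (simp add: algebra_simps)
  then have A: "(1-m)*g \<le> (L-1)*g" using assms by (intro mult_right_mono) auto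
  have "L*m - 1 \<le> L - 1" using \<open>L*m \<le> L\<close> by simp
  then have B: "(L*m-1)*g \<le> (L-1)*g" using assms by (intro mult_right_mono) auto
  show ?thesis using A B assms by (auto simp: abs_if algebra_simps)
qed

lemma aux_contr:
  fixes r m L :: real
  assumes "0 < r" "r \<le> 1" "0 < m" "m \<le> 1" "1 \<le> L"
  shows "L*m - r*(L*m-1) \<le> (1 + (1-r)*(L-1)) * (m + r*(1-m))"
proof -
  have "(1-r)*(L-1)*m \<le> (1-r)*(L-1)*(m + r*(1-m))"
    using assms by (intro mult_left_mono) auto
  moreover have "L*m - r*(L*m-1) = (m + r*(1-m)) + (1-r)*(L-1)*m" by (simp add: algebra_simps)
  moreover have "(1 + (1-r)*(L-1)) * (m + r*(1-m)) = (m + r*(1-m)) + (1-r)*(L-1)*(m + r*(1-m))"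
    by (simp add: algebra_simps)
  ultimately show ?thesis by linarith
qed

context ssm
begin

lemma Rel_m_bounds:
  assumes F: "dens F" and G: "dens G" and m: "0 < m" "\<And>x. m * G x \<le> F x \<and> F x \<le> L * m * G x"
  shows "m \<le> 1" "1 \<le> L * m"
proof -
  note IF = dens_int[OF F] and IG = dens_int[OF G]
  have "(\<integral>x. m * G x \<partial>\<mu>) \<le> (\<integral>x. F x \<partial>\<mu>)"
    using IF IG m by (intro integral_mono) auto
  then show "m \<le> 1" using IF IG by simp
  have "(\<integral>x. F x \<partial>\<mu>) \<le> (\<integral>x. L * m * G x \<partial>\<mu>)"
    using IF IG m by (intro integral_mono) auto
  then show "1 \<le> L * m" using IF IG by simp
qed

lemma Rel_L1:
  assumes F: "dens F" and G: "dens G" and R: "Rel F G L"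
  shows "L1_dist \<mu> F G \<le> ennreal (L - 1)"
proof -
  obtain m where m: "0 < m" "\<And>x. m * G x \<le> F x \<and> F x \<le> L * m * G x"
    using R unfolding Rel_def by blast
  note mb = Rel_m_bounds[OF F G m]
  have G0: "\<And>x. 0 \<le> G x" using G unfolding dens_def by auto
  have L1: "1 \<le> L" by (rule L_ge1[OF m(1) mb])
  have [measurable]: "G \<in> borel_measurable borel" using G unfolding dens_def by auto
  have "L1_dist \<mu> F G \<le> (\<integral>\<^sup>+ x. ennreal (L - 1) * ennreal (G x) \<partial>\<mu>)"
    unfolding L1_dist_def
  proof (intro nn_integral_mono)
    fix x
    have "\<bar>F x - G x\<bar> \<le> (L - 1) * G x" using aux_abs[OF m(1) mb G0 ] m(2)[of x] by auto
    then show "ennreal \<bar>F x - G x\<bar> \<le> ennreal (L - 1) * ennreal (G x)"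
      using L1 G0[of x] by (simp add: ennreal_mult[symmetric] ennreal_leI)
  qed
  also have "\<dots> = ennreal (L - 1) * (\<integral>\<^sup>+ x. ennreal (G x) \<partial>\<mu>)"
    by (rule nn_integral_cmult) measurable
  also have "\<dots> = ennreal (L - 1)" using G unfolding dens_def by simp
  finally show ?thesis .
qed

lemma contraction:
  assumes F: "dens F" and G: "dens G" and R: "Rel F G L"
  shows "\<exists>m'>0. \<forall>x. m' * pred G x \<le> pred F x \<and>
           pred F x \<le> (1 + (1 - c_a / C_a) * (L - 1)) * m' * pred G x"
proof -
  obtain m where m: "0 < m" "\<And>x. m * G x \<le> F x \<and> F x \<le> L * m * G x"
    using R unfolding Rel_def by blast
  note mb = Rel_m_bounds[OF F G m]
  have G0: "\<And>x. 0 \<le> G x" using G unfolding dens_def by auto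
  have L1: "1 \<le> L" by (rule L_ge1[OF m(1) mb])
  define r where "r = c_a / C_a"
  have r: "0 < r" "r \<le> 1" using ca_bounds C_pos unfolding r_def by auto
  define m' where "m' = m + r * (1 - m)"
  have m'm: "m \<le> m'" using r mb unfolding m'_def by simp
  note IF = dens_int[OF F] and IG = dens_int[OF G]
  show ?thesis
  proof (intro exI[of _ m'] conjI allI)
    show "0 < m'" using m(1) m'm by linarith
    fix x
    note iF = pred_int(1)[OF F, of x] and iG = pred_int(1)[OF G, of x]
    let ?IF = "\<integral>x'. F x' * a x' x \<partial>\<mu>" and ?IG = "\<integral>x'. G x' * a x' x \<partial>\<mu>"
    have pF: "pred F x = ?IF" and pG: "pred G x = ?IG" using pred_int(2) F G by auto
    have rG: "r * pred G x \<le> c_a * h x"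
    proof -
      have "r * pred G x \<le> r * (C_a * h x)" using pred_bounds(2)[OF G, of x] r by (intro mult_left_mono) auto
      also have "\<dots> = c_a * h x" using C_pos unfolding r_def by simp
      finally show ?thesis .
    qed
    have PG0: "0 \<le> pred G x" using pred_bounds(1)[OF G, of x] ca_bounds h_nonneg[of x]
      by (meson mult_nonneg_nonneg order.strict_implies_order order_trans)
    have e1: "(\<integral>x'. (F x' - m * G x') * a x' x \<partial>\<mu>) = ?IF - m * ?IG"
    proof -
      have "(\<integral>x'. (F x' - m * G x') * a x' x \<partial>\<mu>) = (\<integral>x'. F x' * a x' x - m * (G x' * a x' x) \<partial>\<mu>)"
        by (simp add: algebra_simps)
      also have "\<dots> = ?IF - (\<integral>x'. m * (G x' * a x' x) \<partial>\<mu>)"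
        by (rule Bochner_Integration.integral_diff[OF iF]) (simp add: iG)
      finally show ?thesis by simp
    qed
    have i1: "integrable \<mu> (\<lambda>x'. (F x' - m * G x') * a x' x)"
    proof -
      have "integrable \<mu> (\<lambda>x'. F x' * a x' x - m * (G x' * a x' x))" using iF iG by auto
      then show ?thesis by (simp add: algebra_simps)
    qed
    have e2: "(\<integral>x'. (F x' - m * G x') * (c_a * h x) \<partial>\<mu>) = (1 - m) * (c_a * h x)"
      using IF IG by (simp add: Bochner_Integration.integral_diff)
    have "(\<integral>x'. (F x' - m * G x') * (c_a * h x) \<partial>\<mu>) \<le> (\<integral>x'. (F x' - m * G x') * a x' x \<partial>\<mu>)"
      using i1 IF IG m(2) cond_i by (intro integral_mono) (auto intro!: mult_left_mono)
    then have low: "(1 - m) * (c_a * h x) \<le> ?IF - m * ?IG" using e1 e2 by linarith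
    have "(1 - m) * (r * pred G x) \<le> (1 - m) * (c_a * h x)"
      using rG mb by (intro mult_left_mono) auto
    then have "m' * pred G x \<le> pred F x" using low pF pG unfolding m'_def by (simp add: algebra_simps)
    then show "m' * pred G x \<le> pred F x" .
    have e3: "(\<integral>x'. (L * m * G x' - F x') * a x' x \<partial>\<mu>) = L * m * ?IG - ?IF"
    proof -
      have "(\<integral>x'. (L * m * G x' - F x') * a x' x \<partial>\<mu>) = (\<integral>x'. (L * m) * (G x' * a x' x) - F x' * a x' x \<partial>\<mu>)"
        by (simp add: algebra_simps)
      also have "\<dots> = (\<integral>x'. (L * m) * (G x' * a x' x) \<partial>\<mu>) - ?IF"
        by (rule Bochner_Integration.integral_diff[OF _ iF]) (simp add: iG)
      finally show ?thesis by simp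
    qed
    have i3: "integrable \<mu> (\<lambda>x'. (L * m * G x' - F x') * a x' x)"
    proof -
      have "integrable \<mu> (\<lambda>x'. (L * m) * (G x' * a x' x) - F x' * a x' x)" using iF iG by auto
      then show ?thesis by (simp add: algebra_simps)
    qed
    have e4: "(\<integral>x'. (L * m * G x' - F x') * (c_a * h x) \<partial>\<mu>) = (L * m - 1) * (c_a * h x)"
      using IF IG by (simp add: Bochner_Integration.integral_diff)
    have "(\<integral>x'. (L * m * G x' - F x') * (c_a * h x) \<partial>\<mu>) \<le> (\<integral>x'. (L * m * G x' - F x') * a x' x \<partial>\<mu>)"
      using i3 IF IG m(2) cond_i by (intro integral_mono) (auto intro!: mult_left_mono)
    then have up: "(L * m - 1) * (c_a * h x) \<le> L * m * ?IG - ?IF" using e3 e4 by linarith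
    have "(L * m - 1) * (r * pred G x) \<le> (L * m - 1) * (c_a * h x)"
      using rG mb by (intro mult_left_mono) auto
    then have "pred F x \<le> (L * m - r * (L * m - 1)) * pred G x"
      using up pF pG by (simp add: algebra_simps)
    also have "\<dots> \<le> (1 + (1 - r) * (L - 1)) * m' * pred G x"
      using aux_contr[OF r m(1) mb(1) L1] PG0 unfolding m'_def by (intro mult_right_mono) auto
    finally show "pred F x \<le> (1 + (1 - c_a / C_a) * (L - 1)) * m' * pred G x" unfolding r_def .
  qed
qed

end


lemma indep_coords:
  fixes D :: "'a measure" and I :: "'i set"
  assumes D: "prob_space D" and I: "I \<noteq> {}"
  shows "prob_space.indep_vars (PiM I (\<lambda>_. D)) (\<lambda>_. D) (\<lambda>j \<omega>. \<omega> j) I"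
proof -
  interpret P: prob_space "PiM I (\<lambda>_. D)" using D by (intro prob_space_PiM) auto
  show ?thesis
  proof (subst P.indep_vars_iff_distr_eq_PiM'[OF I])
    show "(\<lambda>\<omega>. \<omega> i) \<in> measurable (PiM I (\<lambda>_. D)) D" if i: "i \<in> I" for i
      using measurable_component_singleton[OF i, where M="\<lambda>_. D"] by simp
    have "distr (PiM I (\<lambda>_. D)) (PiM I (\<lambda>_. D)) (\<lambda>x. \<lambda>i\<in>I. x i) = distr (PiM I (\<lambda>_. D)) (PiM I (\<lambda>_. D)) (\<lambda>x. x)"
      by (rule distr_cong) (auto simp: space_PiM PiE_def extensional_restrict)
    also have "\<dots> = PiM I (\<lambda>_. D)" by (rule distr_id)
    also have "\<dots> = PiM I (\<lambda>i. distr (PiM I (\<lambda>_. D)) D (\<lambda>\<omega>. \<omega> i))"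
      using D by (intro PiM_cong refl) (rule distr_PiM_component[symmetric]; auto)
    finally show "distr (PiM I (\<lambda>_. D)) (PiM I (\<lambda>_. D)) (\<lambda>x. \<lambda>i\<in>I. x i) = PiM I (\<lambda>i. distr (PiM I (\<lambda>_. D)) D (\<lambda>\<omega>. \<omega> i))" .
  qed
qed

lemma hoeffding_freq:
  fixes D :: "'a measure"
  assumes D: "prob_space D" and N1: "1 \<le> N" and B[measurable]: "B \<in> sets D" and th: "0 \<le> \<theta>"
  shows "emeasure (PiM {..<N} (\<lambda>_. D))
           {\<omega> \<in> space (PiM {..<N} (\<lambda>_. D)). \<theta> \<le> \<bar>(1 / real N) * (\<Sum>j<N. indicator B (\<omega> j)) - measure D B\<bar>}
         \<le> ennreal (2 * exp (-2 * real N * \<theta>\<^sup>2))"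
proof -
  let ?P = "PiM {..<N} (\<lambda>_. D)"
  interpret P: prob_space ?P using D by (intro prob_space_PiM) auto
  have "0 \<in> {..<N}" using N1 by simp
  then have I: "{..<N} \<noteq> {}" by blast
  have indep: "P.indep_vars (\<lambda>_. borel) (\<lambda>j \<omega>. indicator B (\<omega> j) :: real) {..<N}"
    by (rule P.indep_vars_compose2[OF indep_coords[OF D I]]) measurable
  have ex: "P.expectation (\<lambda>\<omega>. indicator B (\<omega> j) :: real) = measure D B" if j: "j < N" for j
  proof -
    have "P.expectation (\<lambda>\<omega>. indicator B (\<omega> j) :: real) = integral\<^sup>L (distr ?P D (\<lambda>\<omega>. \<omega> j)) (indicator B)"
      using j by (intro integral_distr[symmetric]) auto
    also have "distr ?P D (\<lambda>\<omega>. \<omega> j) = D" using D j by (intro distr_PiM_component) auto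
    also have "integral\<^sup>L D (indicator B :: _ \<Rightarrow> real) = measure D B"
      by (simp add: Int_absorb2 sets.sets_into_space)
    finally show ?thesis .
  qed
  interpret H: Hoeffding_ineq ?P "{..<N}" "\<lambda>j \<omega>. indicator B (\<omega> j)" "\<lambda>_. 0" "\<lambda>_. 1"
    "\<Sum>j\<in>{..<N}. P.expectation (\<lambda>\<omega>. indicator B (\<omega> j))"
    by unfold_locales (auto simp: indep)
  have mu: "(\<Sum>j\<in>{..<N}. P.expectation (\<lambda>\<omega>. indicator B (\<omega> j) :: real)) = real N * measure D B"
    using ex by simp
  have "P.prob {\<omega> \<in> space ?P. real N * \<theta> \<le> \<bar>(\<Sum>j\<in>{..<N}. indicator B (\<omega> j)) - real N * measure D B\<bar>}
        \<le> 2 * exp (-2 * (real N * \<theta>)\<^sup>2 / (\<Sum>j\<in>{..<N}. (1 - 0)\<^sup>2))"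
    using H.Hoeffding_ineq_abs_ge[of "real N * \<theta>"] th N1 unfolding mu by simp
  also have "\<dots> = 2 * exp (-2 * real N * \<theta>\<^sup>2)"
    using N1 by (simp add: power2_eq_square)
  finally have hb: "P.prob {\<omega> \<in> space ?P. real N * \<theta> \<le> \<bar>(\<Sum>j\<in>{..<N}. indicator B (\<omega> j)) - real N * measure D B\<bar>}
        \<le> 2 * exp (-2 * real N * \<theta>\<^sup>2)" .
  have eqs: "{\<omega> \<in> space ?P. \<theta> \<le> \<bar>(1 / real N) * (\<Sum>j<N. indicator B (\<omega> j)) - measure D B\<bar>}
       = {\<omega> \<in> space ?P. real N * \<theta> \<le> \<bar>(\<Sum>j\<in>{..<N}. indicator B (\<omega> j)) - real N * measure D B\<bar>}"
  proof -
    have "\<theta> \<le> \<bar>(1 / real N) * S - m\<bar> \<longleftrightarrow> real N * \<theta> \<le> \<bar>S - real N * m\<bar>" for S m :: real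
    proof -
      have Np: "0 < real N" using N1 by simp
      have "(1 / real N) * S - m = (S - real N * m) / real N" using Np by (simp add: field_simps)
      then have "\<bar>(1 / real N) * S - m\<bar> = \<bar>S - real N * m\<bar> / real N" using Np by simp
      then show ?thesis using Np by (simp add: pos_le_divide_eq mult.commute)
    qed
    then show ?thesis by simp
  qed
  show ?thesis unfolding eqs P.emeasure_eq_measure using hb by (simp add: ennreal_leI)
qed



context ssm
begin

definition mcU :: "nat \<Rightarrow> (nat \<Rightarrow> 'a) \<Rightarrow> 'a \<Rightarrow> real" where
  "mcU N p x = (1 / real N) * (\<Sum>j<N. a (p j) x)"

lemma mc_dens_Suc:
  "mc_dens \<mu> a0 a b y N (Suc s) p = normalize \<mu> (\<lambda>x. b (Suc s) x (y (Suc s)) * mcU N p x)"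
  by (simp add: mc_dens_def mcU_def)

lemma mcU_bounds:
  assumes N: "1 \<le> N"
  shows "c_a * h x \<le> mcU N p x \<and> mcU N p x \<le> C_a * h x"
proof -
  have Np: "0 < real N" using N by simp
  have "real N * (c_a * h x) \<le> (\<Sum>j<N. a (p j) x)"
    using sum_mono[of "{..<N}" "\<lambda>j. c_a * h x" "\<lambda>j. a (p j) x"] cond_i by simp
  moreover have "(\<Sum>j<N. a (p j) x) \<le> real N * (C_a * h x)"
    using sum_mono[of "{..<N}" "\<lambda>j. a (p j) x" "\<lambda>j. C_a * h x"] cond_i by simp
  ultimately show ?thesis using Np unfolding mcU_def
    by (auto simp: field_simps)
qed

lemma mcU_meas[measurable]: "mcU N p \<in> borel_measurable borel"
  unfolding mcU_def by measurable

lemma mc_dens_dens: "1 \<le> N \<Longrightarrow> dens (mc_dens \<mu> a0 a b y N (Suc s) p)"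
  unfolding mc_dens_Suc by (rule norm_dens) (auto simp: mcU_bounds)

lemma universal:
  assumes N: "1 \<le> N"
  shows "Rel (mc_dens \<mu> a0 a b y N (Suc s) p) (filt \<mu> a0 a b y (Suc s)) ((C_a / c_a)\<^sup>2)"
proof -
  have G: "dens (filt \<mu> a0 a b y s)" by (rule filt_dens)
  have [measurable]: "filt \<mu> a0 a b y s \<in> borel_measurable borel" using G unfolding dens_def by auto
  show ?thesis
    unfolding mc_dens_Suc filt_Suc Phi_def
  proof (rule norm_rel[where m = "c_a / C_a"])
    show "c_a * h x \<le> pred (filt \<mu> a0 a b y s) x \<and> pred (filt \<mu> a0 a b y s) x \<le> C_a * h x" for x
      using pred_bounds[OF G] by auto
    show "0 < c_a / C_a" using ca_bounds C_pos by simp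
    fix x
    let ?V = "pred (filt \<mu> a0 a b y s) x" and ?U = "mcU N p x"
    have V: "c_a * h x \<le> ?V" "?V \<le> C_a * h x" using pred_bounds[OF G] by auto
    have U: "c_a * h x \<le> ?U" "?U \<le> C_a * h x" using mcU_bounds[OF N] by auto
    have "c_a / C_a * ?V \<le> c_a / C_a * (C_a * h x)"
      using V ca_bounds C_pos by (intro mult_left_mono) auto
    also have "\<dots> = c_a * h x" using C_pos by simp
    finally show "c_a / C_a * ?V \<le> ?U \<and> ?U \<le> (C_a / c_a)\<^sup>2 * (c_a / C_a) * ?V"
    proof (intro conjI)
      have "?U \<le> C_a * h x" by (rule U(2))
      also have "\<dots> = (C_a / c_a) * (c_a * h x)" using ca_bounds by simp
      also have "\<dots> \<le> (C_a / c_a) * ?V" using V ca_bounds C_pos by (intro mult_left_mono) auto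
      also have "\<dots> = (C_a / c_a)\<^sup>2 * (c_a / C_a) * ?V" using ca_bounds C_pos by (simp add: power2_eq_square)
      finally show "?U \<le> (C_a / c_a)\<^sup>2 * (c_a / C_a) * ?V" .
    qed (use U in auto)
  qed (auto simp: mcU_bounds[OF N])
qed

abbreviation "Om N \<equiv> PiM {..<N} (\<lambda>_. borel :: 'a measure)"

lemma mcU_joint[measurable]: "(\<lambda>(p, x). mcU N p x) \<in> borel_measurable (Om N \<Otimes>\<^sub>M borel)"
  unfolding mcU_def by measurable

lemma mc_dens_joint[measurable]:
  "(\<lambda>(p, x). mc_dens \<mu> a0 a b y N (Suc s) p x) \<in> borel_measurable (Om N \<Otimes>\<^sub>M borel)"
  unfolding mc_dens_Suc normalize_def by measurable

end


context ssm
begin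

definition kern :: "nat \<Rightarrow> nat \<Rightarrow> (nat \<Rightarrow> 'a) \<Rightarrow> (nat \<Rightarrow> 'a) measure" where
  "kern N s p = PiM {..<N} (\<lambda>_. density \<mu> (\<lambda>x. ennreal (mc_dens \<mu> a0 a b y N (Suc s) p x)))"

lemma prob_density:
  assumes F: "dens F" shows "prob_space (density \<mu> (\<lambda>x. ennreal (F x)))"
proof (rule prob_spaceI)
  have [measurable]: "F \<in> borel_measurable borel" using F unfolding dens_def by auto
  have "emeasure (density \<mu> (\<lambda>x. ennreal (F x))) (space (density \<mu> (\<lambda>x. ennreal (F x))))
        = (\<integral>\<^sup>+ x. ennreal (F x) * indicator (space \<mu>) x \<partial>\<mu>)"
    by (subst emeasure_density) auto
  also have "\<dots> = (\<integral>\<^sup>+ x. ennreal (F x) \<partial>\<mu>)" by (intro nn_integral_cong) auto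
  also have "\<dots> = 1" using F unfolding dens_def by simp
  finally show "emeasure (density \<mu> (\<lambda>x. ennreal (F x))) (space (density \<mu> (\<lambda>x. ennreal (F x)))) = 1" .
qed

lemma sets_dens_PiM: "sets (PiM {..<N} (\<lambda>_. density \<mu> f)) = sets (Om N)"
  by (intro sets_PiM_cong) (auto simp: sets_mu)

lemma space_dens_PiM: "space (PiM {..<N} (\<lambda>_. density \<mu> f)) = space (Om N)"
  using sets_dens_PiM sets_eq_imp_space_eq by blast

lemma kern_meas:
  assumes N: "1 \<le> N"
  shows "kern N s \<in> Om N \<rightarrow>\<^sub>M prob_algebra (Om N)"
proof -
  let ?G = "{(\<Pi>\<^sub>E i\<in>{..<N}. X i) |X. (\<forall>i. X i \<in> sets ((\<lambda>_. borel :: 'a measure) i)) \<and> finite {i. X i \<noteq> space ((\<lambda>_. borel :: 'a measure) i)}}"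
  have eq: "sets (Om N) = sigma_sets (\<Pi>\<^sub>E i\<in>{..<N}. space ((\<lambda>_. borel :: 'a measure) i)) ?G"
    by (rule sets_PiM_finite)
  show ?thesis
  proof (rule measurable_prob_algebra_generated[OF eq])
    show "Int_stable ?G"
    proof (rule Int_stableI)
      fix A B assume "A \<in> ?G" "B \<in> ?G"
      then obtain X Y where X: "A = (\<Pi>\<^sub>E i\<in>{..<N}. X i)" "\<forall>i. X i \<in> sets borel" "finite {i. X i \<noteq> space borel}"
        and Y: "B = (\<Pi>\<^sub>E i\<in>{..<N}. Y i)" "\<forall>i. Y i \<in> sets borel" "finite {i. Y i \<noteq> space borel}"
        by auto
      have "A \<inter> B = (\<Pi>\<^sub>E i\<in>{..<N}. X i \<inter> Y i)" using X Y by auto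
      moreover have "finite {i. X i \<inter> Y i \<noteq> space borel}"
        by (rule finite_subset[OF _ finite_UnI[OF X(3) Y(3)]]) auto
      ultimately show "A \<inter> B \<in> ?G" using X Y by (auto intro!: exI[of _ "\<lambda>i. X i \<inter> Y i"])
    qed
    show "?G \<subseteq> Pow (\<Pi>\<^sub>E i\<in>{..<N}. space ((\<lambda>_. borel :: 'a measure) i))"
      by auto
    fix p assume p: "p \<in> space (Om N)"
    show "prob_space (kern N s p)" unfolding kern_def
      by (intro prob_space_PiM prob_density mc_dens_dens N)
    show "sets (kern N s p) = sets (Om N)" unfolding kern_def by (rule sets_dens_PiM)
  next
    fix A assume "A \<in> ?G"
    then obtain X where X: "A = (\<Pi>\<^sub>E i\<in>{..<N}. X i)" "\<forall>i. X i \<in> sets borel" by auto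
    have [measurable]: "X i \<in> sets borel" for i using X by auto
    have e: "emeasure (kern N s p) A = (\<Prod>i<N. \<integral>\<^sup>+ x. ennreal (mc_dens \<mu> a0 a b y N (Suc s) p x) * indicator (X i) x \<partial>\<mu>)"
      for p
    proof -
      interpret pp: product_prob_space "\<lambda>_. density \<mu> (\<lambda>x. ennreal (mc_dens \<mu> a0 a b y N (Suc s) p x))"
        by (intro product_prob_spaceI prob_density mc_dens_dens N)
      have "emeasure (kern N s p) A = (\<Prod>i<N. emeasure (density \<mu> (\<lambda>x. ennreal (mc_dens \<mu> a0 a b y N (Suc s) p x))) (X i))"
        unfolding kern_def X(1) by (rule pp.emeasure_PiM) (auto simp: sets_mu)
      also have "\<dots> = (\<Prod>i<N. \<integral>\<^sup>+ x. ennreal (mc_dens \<mu> a0 a b y N (Suc s) p x) * indicator (X i) x \<partial>\<mu>)"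
      proof (intro prod.cong refl emeasure_density)
        have [measurable]: "mc_dens \<mu> a0 a b y N (Suc s) p \<in> borel_measurable borel"
          using mc_dens_dens[OF N] unfolding dens_def by auto
        show "(\<lambda>x. ennreal (mc_dens \<mu> a0 a b y N (Suc s) p x)) \<in> borel_measurable \<mu>" by measurable
      qed (simp add: sets_mu)
      finally show ?thesis .
    qed
    show "(\<lambda>p. emeasure (kern N s p) A) \<in> borel_measurable (Om N)"
      unfolding e by measurable
  qed
qed

lemma particles_Suc: "particles \<mu> a0 a b y N (Suc s) = particles \<mu> a0 a b y N s \<bind> kern N s"
  by (simp add: kern_def[abs_def])

lemma particles_pa:
  assumes N: "1 \<le> N"
  shows "particles \<mu> a0 a b y N s \<in> space (prob_algebra (Om N))"
proof (induction s)
  case 0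
  have "prob_space (PiM {..<N} (\<lambda>_. density \<mu> (\<lambda>x. ennreal (a0 x))))"
    by (intro prob_space_PiM prob_density) (simp add: dens_def a0_nonneg a0_prob)
  then show ?case by (simp add: space_prob_algebra sets_dens_PiM)
next
  case (Suc s)
  have "prob_space (particles \<mu> a0 a b y N s \<bind> kern N s)"
    by (rule prob_space_bind'[OF Suc kern_meas[OF N]])
  moreover have "sets (particles \<mu> a0 a b y N s \<bind> kern N s) = sets (Om N)"
    by (rule sets_bind'[OF Suc kern_meas[OF N]])
  ultimately show ?case unfolding particles_Suc by (simp add: space_prob_algebra)
qed

lemma particles_prob: "1 \<le> N \<Longrightarrow> prob_space (particles \<mu> a0 a b y N s)"
  using particles_pa by (simp add: space_prob_algebra)

lemma particles_sets: "1 \<le> N \<Longrightarrow> sets (particles \<mu> a0 a b y N s) = sets (Om N)"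
  using particles_pa by (simp add: space_prob_algebra)

lemma kern_sub:
  assumes N: "1 \<le> N" shows "kern N s \<in> particles \<mu> a0 a b y N s \<rightarrow>\<^sub>M subprob_algebra (Om N)"
proof -
  have "kern N s \<in> Om N \<rightarrow>\<^sub>M subprob_algebra (Om N)"
    by (rule measurable_prob_algebraD[OF kern_meas[OF N]])
  moreover have "particles \<mu> a0 a b y N s \<rightarrow>\<^sub>M subprob_algebra (Om N) = Om N \<rightarrow>\<^sub>M subprob_algebra (Om N)"
    by (rule measurable_cong_sets[OF particles_sets[OF N] refl])
  ultimately show ?thesis by simp
qed

end


locale ssm_par = ssm +
  fixes N K :: nat and B :: "nat \<Rightarrow> 'a set" and z :: "nat \<Rightarrow> 'a" and e \<theta> \<eta> :: real
  assumes N1: "1 \<le> N"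
    and B_sets: "\<And>k. B k \<in> sets borel"
    and B_part: "\<And>x. (\<Sum>k<K. indicator (B k) x :: real) = 1"
    and B_approx: "\<And>k x' x. k < K \<Longrightarrow> x' \<in> B k \<Longrightarrow> \<bar>a x' x - a (z k) x\<bar> \<le> e * h x"
    and e_nn: "0 \<le> e" and th_pos: "0 < \<theta>" and eta_pos: "0 < \<eta>" and eta_r: "\<eta> \<le> c_a / C_a / 2"
    and small: "2 * e + real K * C_a * \<theta> \<le> c_a * \<eta> / 4"
begin

lemma B_m[measurable]: "B k \<in> sets borel" by (rule B_sets)

definition PF :: "('a \<Rightarrow> real) \<Rightarrow> nat \<Rightarrow> real" where
  "PF F k = measure (density \<mu> (\<lambda>x. ennreal (F x))) (B k)"

definition freq :: "(nat \<Rightarrow> 'a) \<Rightarrow> nat \<Rightarrow> real" where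
  "freq p k = (1 / real N) * (\<Sum>j<N. indicator (B k) (p j))"

definition goodp :: "('a \<Rightarrow> real) \<Rightarrow> (nat \<Rightarrow> 'a) \<Rightarrow> bool" where
  "goodp F p \<longleftrightarrow> (\<forall>k<K. \<bar>freq p k - PF F k\<bar> < \<theta>)"

lemma PF_int:
  assumes F: "dens F"
  shows "PF F k = (\<integral>x. F x * indicator (B k) x \<partial>\<mu>)"
proof -
  have [measurable]: "F \<in> borel_measurable borel" using F unfolding dens_def by auto
  have "integral\<^sup>L (density \<mu> (\<lambda>x. ennreal (F x))) (indicator (B k) :: _ \<Rightarrow> real)
        = (\<integral>x. F x *\<^sub>R indicator (B k) x \<partial>\<mu>)"
    using F unfolding dens_def by (intro integral_density) auto
  moreover have "integral\<^sup>L (density \<mu> (\<lambda>x. ennreal (F x))) (indicator (B k) :: _ \<Rightarrow> real) = PF F k"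
    unfolding PF_def by (simp add: Int_absorb2 sets.sets_into_space)
  ultimately show ?thesis by simp
qed

definition appr :: "'a \<Rightarrow> 'a \<Rightarrow> real" where
  "appr x' x = (\<Sum>k<K. indicator (B k) x' * a (z k) x)"

lemma appr_err: "\<bar>a x' x - appr x' x\<bar> \<le> e * h x"
proof -
  have "a x' x - appr x' x = (\<Sum>k<K. indicator (B k) x' * (a x' x - a (z k) x))"
    unfolding appr_def
    by (simp add: right_diff_distrib sum_subtractf sum_distrib_right[symmetric] B_part)
  also have "\<bar>\<dots>\<bar> \<le> (\<Sum>k<K. \<bar>indicator (B k) x' * (a x' x - a (z k) x)\<bar>)"
    by (rule sum_abs)
  also have "\<dots> \<le> (\<Sum>k<K. indicator (B k) x' * (e * h x))"
  proof (intro sum_mono)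
    fix k assume "k \<in> {..<K}"
    then show "\<bar>indicator (B k) x' * (a x' x - a (z k) x)\<bar> \<le> indicator (B k) x' * (e * h x)"
      using B_approx[of k x' x] by (cases "x' \<in> B k") auto
  qed
  also have "\<dots> = e * h x" by (simp add: sum_distrib_right[symmetric] B_part)
  finally show ?thesis .
qed

lemma appr_meas[measurable]: "(\<lambda>x'. appr x' x) \<in> borel_measurable borel"
  unfolding appr_def by measurable

lemma approx_U:
  assumes F: "dens F" and good: "goodp F p"
  shows "\<bar>mcU N p x - pred F x\<bar> \<le> (2 * e + real K * C_a * \<theta>) * h x"
proof -
  have [measurable]: "F \<in> borel_measurable borel" using F unfolding dens_def by auto
  have F0: "\<And>x. 0 \<le> F x" using F unfolding dens_def by auto
  note IF = dens_int[OF F]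
  have Np: "0 < real N" using N1 by simp
  have s1: "\<bar>mcU N p x - (1 / real N) * (\<Sum>j<N. appr (p j) x)\<bar> \<le> e * h x"
  proof -
    have "mcU N p x - (1 / real N) * (\<Sum>j<N. appr (p j) x) = (1 / real N) * (\<Sum>j<N. a (p j) x - appr (p j) x)"
      unfolding mcU_def by (simp add: sum_subtractf right_diff_distrib)
    also have "\<bar>\<dots>\<bar> = (1 / real N) * \<bar>\<Sum>j<N. a (p j) x - appr (p j) x\<bar>"
      using Np by (simp add: abs_mult)
    also have "\<dots> \<le> (1 / real N) * (\<Sum>j<N. \<bar>a (p j) x - appr (p j) x\<bar>)"
      using Np by (intro mult_left_mono sum_abs) auto
    also have "\<dots> \<le> (1 / real N) * (\<Sum>j<N. e * h x)"
      using Np appr_err by (intro mult_left_mono sum_mono) auto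
    also have "\<dots> = e * h x" using Np by simp
    finally show ?thesis .
  qed
  have s2: "(1 / real N) * (\<Sum>j<N. appr (p j) x) = (\<Sum>k<K. freq p k * a (z k) x)"
  proof -
    have "(\<Sum>k<K. freq p k * a (z k) x) = (\<Sum>k<K. \<Sum>j<N. (1 / real N) * (indicator (B k) (p j) * a (z k) x))"
      unfolding freq_def by (simp only: mult.assoc sum_distrib_right sum_distrib_left)
    also have "\<dots> = (\<Sum>j<N. \<Sum>k<K. (1 / real N) * (indicator (B k) (p j) * a (z k) x))"
      by (rule sum.swap)
    also have "\<dots> = (1 / real N) * (\<Sum>j<N. appr (p j) x)"
      unfolding appr_def by (simp only: sum_distrib_left)
    finally show ?thesis by simp
  qed
  have iB: "integrable \<mu> (\<lambda>x'. F x' * indicator (B k) x')" for k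
  proof -
    have "integrable \<mu> (\<lambda>x'. indicator (B k) x' *\<^sub>R F x')"
      using IF by (intro integrable_mult_indicator) (auto simp: sets_mu)
    then show ?thesis by (simp add: mult.commute)
  qed
  have s3: "(\<integral>x'. F x' * appr x' x \<partial>\<mu>) = (\<Sum>k<K. PF F k * a (z k) x)"
  proof -
    have "(\<integral>x'. F x' * appr x' x \<partial>\<mu>) = (\<integral>x'. (\<Sum>k<K. (F x' * indicator (B k) x') * a (z k) x) \<partial>\<mu>)"
      unfolding appr_def by (simp only: sum_distrib_left mult.assoc)
    also have "\<dots> = (\<Sum>k<K. (\<integral>x'. (F x' * indicator (B k) x') * a (z k) x \<partial>\<mu>))"
      by (rule Bochner_Integration.integral_sum) (simp add: iB)
    also have "\<dots> = (\<Sum>k<K. PF F k * a (z k) x)"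
      by (simp add: PF_int[OF F])
    finally show ?thesis .
  qed
  have iA: "integrable \<mu> (\<lambda>x'. F x' * appr x' x)"
  proof -
    have "integrable \<mu> (\<lambda>x'. (\<Sum>k<K. (F x' * indicator (B k) x') * a (z k) x))"
      by (simp add: iB)
    then show ?thesis unfolding appr_def by (simp only: sum_distrib_left mult.assoc)
  qed
  note iP = pred_int[OF F]
  have s4: "\<bar>pred F x - (\<integral>x'. F x' * appr x' x \<partial>\<mu>)\<bar> \<le> e * h x"
  proof -
    have "pred F x - (\<integral>x'. F x' * appr x' x \<partial>\<mu>) = (\<integral>x'. F x' * a x' x - F x' * appr x' x \<partial>\<mu>)"
      using iP iA by (simp add: Bochner_Integration.integral_diff)
    also have "\<bar>\<dots>\<bar> \<le> (\<integral>x'. \<bar>F x' * a x' x - F x' * appr x' x\<bar> \<partial>\<mu>)"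
      by (rule integral_abs_bound)
    also have "\<dots> \<le> (\<integral>x'. (e * h x) * F x' \<partial>\<mu>)"
    proof (rule integral_mono)
      show "integrable \<mu> (\<lambda>x'. \<bar>F x' * a x' x - F x' * appr x' x\<bar>)"
        using iP(1)[of x] iA by auto
      show "integrable \<mu> (\<lambda>x'. (e * h x) * F x')" using IF by simp
      fix x' 
      have "\<bar>F x' * a x' x - F x' * appr x' x\<bar> = F x' * \<bar>a x' x - appr x' x\<bar>"
        using F0[of x'] by (simp add: right_diff_distrib[symmetric] abs_mult)
      also have "\<dots> \<le> F x' * (e * h x)" using F0[of x'] appr_err by (intro mult_left_mono) auto
      finally show "\<bar>F x' * a x' x - F x' * appr x' x\<bar> \<le> (e * h x) * F x'" by (simp add: mult_ac)
    qed
    also have "\<dots> = e * h x" using IF by simp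
    finally show ?thesis .
  qed
  have s5: "\<bar>(\<Sum>k<K. freq p k * a (z k) x) - (\<Sum>k<K. PF F k * a (z k) x)\<bar> \<le> real K * C_a * \<theta> * h x"
  proof -
    have "\<bar>(\<Sum>k<K. freq p k * a (z k) x) - (\<Sum>k<K. PF F k * a (z k) x)\<bar>
          = \<bar>\<Sum>k<K. (freq p k - PF F k) * a (z k) x\<bar>"
      by (simp add: sum_subtractf left_diff_distrib)
    also have "\<dots> \<le> (\<Sum>k<K. \<bar>(freq p k - PF F k) * a (z k) x\<bar>)" by (rule sum_abs)
    also have "\<dots> \<le> (\<Sum>k<K. \<theta> * (C_a * h x))"
    proof (intro sum_mono)
      fix k assume k: "k \<in> {..<K}"
      have "\<bar>freq p k - PF F k\<bar> \<le> \<theta>" using good k unfolding goodp_def by auto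
      moreover have "\<bar>a (z k) x\<bar> \<le> C_a * h x" using cond_i a_nonneg by (simp add: abs_of_nonneg)
      ultimately show "\<bar>(freq p k - PF F k) * a (z k) x\<bar> \<le> \<theta> * (C_a * h x)"
        unfolding abs_mult by (intro mult_mono) auto
    qed
    also have "\<dots> = real K * C_a * \<theta> * h x" by (simp add: mult_ac)
    finally show ?thesis .
  qed
  have "\<bar>mcU N p x - pred F x\<bar> \<le> e * h x + real K * C_a * \<theta> * h x + e * h x"
    using s1 s2 s3 s4 s5 by linarith
  then show ?thesis by (simp add: algebra_simps)
qed

end


context ssm_par
begin

lemma r_bounds: "0 < c_a / C_a" "c_a / C_a \<le> 1"
  using ca_bounds C_pos by auto

lemma local_rel:
  assumes F: "dens F" and good: "goodp F p"
  shows "Rel (mc_dens \<mu> a0 a b y N (Suc s) p) (Phi (Suc s) F) (1 + \<eta>)"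
  unfolding mc_dens_Suc Phi_def
proof (rule norm_rel[where m = "1 - \<eta> / 4"])
  have [measurable]: "F \<in> borel_measurable borel" using F unfolding dens_def by auto
  show "pred F \<in> borel_measurable borel" by measurable
  show "c_a * h x \<le> mcU N p x \<and> mcU N p x \<le> C_a * h x" for x using mcU_bounds[OF N1] by auto
  show "c_a * h x \<le> pred F x \<and> pred F x \<le> C_a * h x" for x using pred_bounds[OF F] by auto
  have "c_a / C_a / 2 \<le> 1/2" using r_bounds by simp
  then have eta_half: "\<eta> \<le> 1/2" using eta_r by linarith
  show "0 < 1 - \<eta> / 4" using eta_half by simp
  fix x
  let ?U = "mcU N p x" and ?V = "pred F x"
  have d: "\<bar>?U - ?V\<bar> \<le> (2 * e + real K * C_a * \<theta>) * h x" by (rule approx_U[OF F good])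
  have "(2 * e + real K * C_a * \<theta>) * h x \<le> (c_a * \<eta> / 4) * h x"
    using small h_nonneg by (intro mult_right_mono) auto
  also have "\<dots> = (\<eta> / 4) * (c_a * h x)" by simp
  also have "\<dots> \<le> (\<eta> / 4) * ?V" using pred_bounds(1)[OF F, of x] eta_pos by (intro mult_left_mono) auto
  finally have d2: "\<bar>?U - ?V\<bar> \<le> (\<eta> / 4) * ?V" using d by linarith
  have V0: "0 \<le> ?V" using pred_bounds(1)[OF F, of x] ca_bounds h_nonneg[of x]
    by (meson mult_nonneg_nonneg order.strict_implies_order order_trans)
  show "(1 - \<eta> / 4) * ?V \<le> ?U \<and> ?U \<le> (1 + \<eta>) * (1 - \<eta> / 4) * ?V"
  proof
    have A1: "?U - ?V \<le> (\<eta> / 4) * ?V" by (rule abs_le_D1[OF d2])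
    have A2: "- (?U - ?V) \<le> (\<eta> / 4) * ?V" by (rule abs_le_D2[OF d2])
    have q1: "(1 - \<eta> / 4) * ?V = ?V - (\<eta> / 4) * ?V" by (simp add: algebra_simps)
    have q2: "(1 + \<eta> / 4) * ?V = ?V + (\<eta> / 4) * ?V" by (simp add: algebra_simps)
    show "(1 - \<eta> / 4) * ?V \<le> ?U" unfolding q1 using A2 by simp
    have "?U \<le> (1 + \<eta> / 4) * ?V" unfolding q2 using A1 by simp
    also have "\<dots> \<le> (1 + \<eta>) * (1 - \<eta> / 4) * ?V"
    proof (rule mult_right_mono[OF _ V0])
      have "\<eta> * \<eta> \<le> 2 * \<eta>" using eta_pos eta_half by (intro mult_right_mono) auto
      then have "4 * (1 + \<eta> / 4) \<le> 4 * ((1 + \<eta>) * (1 - \<eta> / 4))"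
        by (simp add: field_simps)
      then show "1 + \<eta> / 4 \<le> (1 + \<eta>) * (1 - \<eta> / 4)" by simp
    qed
    finally show "?U \<le> (1 + \<eta>) * (1 - \<eta> / 4) * ?V" .
  qed
qed (auto)

definition gfun :: "real \<Rightarrow> real" where
  "gfun L = (1 + \<eta>) * (1 + (1 - c_a / C_a) * (L - 1))"

lemma local_step:
  assumes F: "dens F" and R: "Rel F (filt \<mu> a0 a b y s) L" and L: "1 \<le> L" and good: "goodp F p"
  shows "Rel (mc_dens \<mu> a0 a b y N (Suc s) p) (filt \<mu> a0 a b y (Suc s)) (gfun L)"
proof -
  have G: "dens (filt \<mu> a0 a b y s)" by (rule filt_dens)
  have [measurable]: "F \<in> borel_measurable borel" "filt \<mu> a0 a b y s \<in> borel_measurable borel"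
    using F G unfolding dens_def by auto
  obtain m' where m': "0 < m'" "\<And>x. m' * pred (filt \<mu> a0 a b y s) x \<le> pred F x \<and>
       pred F x \<le> (1 + (1 - c_a / C_a) * (L - 1)) * m' * pred (filt \<mu> a0 a b y s) x"
    using contraction[OF F G R] by blast
  have R2: "Rel (Phi (Suc s) F) (filt \<mu> a0 a b y (Suc s)) (1 + (1 - c_a / C_a) * (L - 1))"
    unfolding filt_Suc Phi_def
    by (rule norm_rel[OF _ _ _ _ _ m'(1)]) (use pred_bounds[OF F] pred_bounds[OF G] m'(2) in auto)
  have H0: "\<And>x. 0 \<le> filt \<mu> a0 a b y (Suc s) x" using filt_dens[of "Suc s"] unfolding dens_def by blast
  show ?thesis unfolding gfun_def
    by (rule Rel_trans[OF local_rel[OF F good] R2 H0]) (use eta_pos in auto)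
qed

definition beta :: real where
  "beta = real K * (2 * exp (-2 * real N * \<theta>\<^sup>2))"

lemma beta_nn: "0 \<le> beta" unfolding beta_def by simp

lemma badfreq_bound:
  assumes F: "dens F"
  shows "emeasure (PiM {..<N} (\<lambda>_. density \<mu> (\<lambda>x. ennreal (F x))))
           {p \<in> space (PiM {..<N} (\<lambda>_. density \<mu> (\<lambda>x. ennreal (F x)))). \<not> goodp F p} \<le> ennreal beta"
proof -
  let ?D = "density \<mu> (\<lambda>x. ennreal (F x))"
  let ?P = "PiM {..<N} (\<lambda>_. ?D)"
  let ?A = "\<lambda>k. {p \<in> space ?P. \<theta> \<le> \<bar>(1 / real N) * (\<Sum>j<N. indicator (B k) (p j)) - measure ?D (B k)\<bar>}"
  have D: "prob_space ?D" by (rule prob_density[OF F])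
  have "{p \<in> space ?P. \<not> goodp F p} = (\<Union>k\<in>{..<K}. ?A k)"
    unfolding goodp_def freq_def PF_def by (auto simp: not_less)
  moreover have "?A k \<in> sets ?P" for k
  proof -
    have [measurable]: "B k \<in> sets ?D" by (simp add: sets_mu)
    show ?thesis by measurable
  qed
  ultimately have "emeasure ?P {p \<in> space ?P. \<not> goodp F p} \<le> (\<Sum>k<K. emeasure ?P (?A k))"
    by (simp add: emeasure_subadditive_finite image_subset_iff)
  also have "\<dots> \<le> (\<Sum>k<K. ennreal (2 * exp (-2 * real N * \<theta>\<^sup>2)))"
    by (intro sum_mono hoeffding_freq[OF D N1]) (use th_pos in \<open>auto simp: sets_mu\<close>)
  also have "\<dots> = ennreal beta" unfolding beta_def by (simp add: ennreal_of_nat_eq_real_of_nat ennreal_mult)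
  finally show ?thesis .
qed

definition Bad :: "nat \<Rightarrow> real \<Rightarrow> (nat \<Rightarrow> 'a) set" where
  "Bad s L = {p. \<not> Rel (mc_dens \<mu> a0 a b y N (Suc s) p) (filt \<mu> a0 a b y (Suc s)) L}"

lemma step_bound:
  assumes F: "dens F" and R: "Rel F (filt \<mu> a0 a b y s) L" and L: "1 \<le> L"
  shows "(\<integral>\<^sup>+ p. indicator (Bad s (gfun L)) p \<partial>(PiM {..<N} (\<lambda>_. density \<mu> (\<lambda>x. ennreal (F x)))))
         \<le> ennreal beta"
proof -
  let ?P = "PiM {..<N} (\<lambda>_. density \<mu> (\<lambda>x. ennreal (F x)))"
  let ?S = "{p \<in> space ?P. \<not> goodp F p}"
  have S: "?S \<in> sets ?P"
  proof -
    have "?S = {p \<in> space ?P. \<not> (\<forall>k<K. \<bar>(1 / real N) * (\<Sum>j<N. indicator (B k) (p j)) - PF F k\<bar> < \<theta>)}"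
      unfolding goodp_def freq_def by simp
    also have "\<dots> \<in> sets ?P"
    proof -
      have [measurable]: "B k \<in> sets (density \<mu> (\<lambda>x. ennreal (F x)))" for k by (simp add: sets_mu)
      show ?thesis by measurable
    qed
    finally show ?thesis .
  qed
  have "(\<integral>\<^sup>+ p. indicator (Bad s (gfun L)) p \<partial>?P) \<le> (\<integral>\<^sup>+ p. indicator ?S p \<partial>?P)"
  proof (intro nn_integral_mono)
    fix p assume p: "p \<in> space ?P"
    show "indicator (Bad s (gfun L)) p \<le> (indicator ?S p :: ennreal)"
      using local_step[OF F R L, of p] p unfolding Bad_def by (auto simp: indicator_def)
  qed
  also have "\<dots> = emeasure ?P ?S" using S by simp
  also have "\<dots> \<le> ennreal beta" by (rule badfreq_bound[OF F])
  finally show ?thesis .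
qed

end


context ssm_par
begin

definition Lseq :: "nat \<Rightarrow> real" where
  "Lseq k = (gfun ^^ k) ((C_a / c_a)\<^sup>2)"

lemma Lmax_ge1: "1 \<le> (C_a / c_a)\<^sup>2"
  using ca_bounds by (simp add: one_le_power)

lemma gfun_ge1:
  assumes L: "1 \<le> L" shows "1 \<le> gfun L"
proof -
  have "0 \<le> (1 - c_a / C_a) * (L - 1)" using r_bounds L by simp
  then have X: "1 \<le> 1 + (1 - c_a / C_a) * (L - 1)" by simp
  have "1 * 1 \<le> (1 + \<eta>) * (1 + (1 - c_a / C_a) * (L - 1))"
    using X eta_pos by (intro mult_mono) auto
  then show ?thesis unfolding gfun_def by simp
qed

lemma Lseq_ge1: "1 \<le> Lseq k"
  by (induction k) (auto simp: Lseq_def Lmax_ge1 gfun_ge1)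

lemma Lseq_Suc: "Lseq (Suc k) = gfun (Lseq k)"
  by (simp add: Lseq_def)

lemma main_ind: "(\<integral>\<^sup>+ p. indicator (Bad s (Lseq k)) p \<partial>(particles \<mu> a0 a b y N s)) \<le> ennreal (real k * beta)"
proof (induction k arbitrary: s)
  case 0
  have "Bad s (Lseq 0) = {}"
    unfolding Bad_def Lseq_def using universal[OF N1] by auto
  then show ?case by simp
next
  case (Suc k)
  note L1 = Lseq_ge1[of k]
  show ?case
  proof (cases s)
    case 0
    have "Rel a0 (filt \<mu> a0 a b y 0) (Lseq k)" using Rel_refl[of a0, OF a0_nonneg L1] by simp
    then have "(\<integral>\<^sup>+ p. indicator (Bad 0 (gfun (Lseq k))) p \<partial>(particles \<mu> a0 a b y N 0)) \<le> ennreal beta"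
      using step_bound[of a0 0 "Lseq k"] L1 a0_nonneg a0_prob by (simp add: dens_def)
    also have "\<dots> \<le> ennreal (real (Suc k) * beta)"
      using beta_nn by (intro ennreal_leI) (simp add: algebra_simps)
    finally show ?thesis using 0 by (simp add: Lseq_Suc)
  next
    case (Suc s')
    let ?M = "particles \<mu> a0 a b y N s'"
    interpret Mp: prob_space ?M by (rule particles_prob[OF N1])
    have "(\<integral>\<^sup>+ p. indicator (Bad (Suc s') (Lseq (Suc k))) p \<partial>(particles \<mu> a0 a b y N (Suc s')))
          \<le> (\<integral>\<^sup>+ q. (\<integral>\<^sup>+ p. indicator (Bad (Suc s') (Lseq (Suc k))) p \<partial>kern N s' q) \<partial>?M)"
      unfolding particles_Suc by (rule nn_integral_bind_le[OF kern_sub[OF N1]])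
    also have "\<dots> \<le> (\<integral>\<^sup>+ q. ennreal beta + indicator (Bad s' (Lseq k)) q \<partial>?M)"
    proof (intro nn_integral_mono)
      fix q assume q: "q \<in> space ?M"
      interpret Kp: prob_space "kern N s' q"
        unfolding kern_def by (intro prob_space_PiM prob_density mc_dens_dens N1)
      show "(\<integral>\<^sup>+ p. indicator (Bad (Suc s') (Lseq (Suc k))) p \<partial>kern N s' q)
            \<le> ennreal beta + indicator (Bad s' (Lseq k)) q"
      proof (cases "q \<in> Bad s' (Lseq k)")
        case True
        have "(\<integral>\<^sup>+ p. indicator (Bad (Suc s') (Lseq (Suc k))) p \<partial>kern N s' q) \<le> (\<integral>\<^sup>+ p. 1 \<partial>kern N s' q)"
          by (intro nn_integral_mono) (auto simp: indicator_def)
        also have "\<dots> = 1" by (simp add: Kp.emeasure_space_1)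
        finally show ?thesis using True by (simp add: add_increasing)
      next
        case False
        then have R: "Rel (mc_dens \<mu> a0 a b y N (Suc s') q) (filt \<mu> a0 a b y (Suc s')) (Lseq k)"
          unfolding Bad_def by simp
        have "(\<integral>\<^sup>+ p. indicator (Bad (Suc s') (gfun (Lseq k))) p \<partial>kern N s' q) \<le> ennreal beta"
          unfolding kern_def by (rule step_bound[OF mc_dens_dens[OF N1] R L1])
        then show ?thesis by (simp add: Lseq_Suc add_increasing2)
      qed
    qed
    also have "\<dots> \<le> ennreal beta * emeasure ?M (space ?M) + (\<integral>\<^sup>+ q. indicator (Bad s' (Lseq k)) q \<partial>?M)"
      by (rule nn_integral_add_const_le) simp
    also have "\<dots> \<le> ennreal beta + ennreal (real k * beta)"
      using Suc.IH[of s'] by (simp add: Mp.emeasure_space_1)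
    also have "\<dots> = ennreal (beta + real k * beta)"
      by (rule ennreal_plus[symmetric]) (use beta_nn in auto)
    also have "beta + real k * beta = real (Suc k) * beta" by (simp add: distrib_right)
    finally show ?thesis using Suc by simp
  qed
qed

lemma final_bound:
  assumes eps: "0 < \<epsilon>" and Lk: "Lseq k - 1 \<le> \<epsilon>"
  shows "mc_error_prob \<mu> a0 a b y N t \<epsilon> \<le> real k * beta"
proof (cases t)
  case 0
  have "mc_error_prob \<mu> a0 a b y N t \<epsilon> = 0"
    unfolding mc_error_prob_def using 0 by (simp add: mc_dens_def L1_dist_def)
  then show ?thesis using beta_nn by simp
next
  case (Suc s)
  let ?M = "particles \<mu> a0 a b y N s"
  interpret Mp: prob_space ?M by (rule particles_prob[OF N1])
  let ?A = "{p \<in> space ?M. L1_dist \<mu> (mc_dens \<mu> a0 a b y N (Suc s) p) (filt \<mu> a0 a b y (Suc s)) > ennreal \<epsilon>}"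
  have "emeasure ?M ?A \<le> (\<integral>\<^sup>+ p. indicator ?A p \<partial>?M)" by (rule emeasure_le_nn_integral_indicator)
  also have "\<dots> \<le> (\<integral>\<^sup>+ p. indicator (Bad s (Lseq k)) p \<partial>?M)"
  proof (intro nn_integral_mono)
    fix p
    show "indicator ?A p \<le> (indicator (Bad s (Lseq k)) p :: ennreal)"
    proof (cases "p \<in> Bad s (Lseq k)")
      case False
      then have "Rel (mc_dens \<mu> a0 a b y N (Suc s) p) (filt \<mu> a0 a b y (Suc s)) (Lseq k)"
        unfolding Bad_def by simp
      then have "L1_dist \<mu> (mc_dens \<mu> a0 a b y N (Suc s) p) (filt \<mu> a0 a b y (Suc s)) \<le> ennreal (Lseq k - 1)"
        by (rule Rel_L1[OF mc_dens_dens[OF N1] filt_dens])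
      also have "\<dots> \<le> ennreal \<epsilon>" using Lk by (rule ennreal_leI)
      finally have "p \<notin> ?A" by (auto simp: not_less)
      then show ?thesis by simp
    qed (simp add: indicator_def)
  qed
  also have "\<dots> \<le> ennreal (real k * beta)" by (rule main_ind)
  finally have "ennreal (measure ?M ?A) \<le> ennreal (real k * beta)"
    by (simp add: Mp.emeasure_eq_measure)
  then have "measure ?M ?A \<le> real k * beta"
    using beta_nn by (simp add: ennreal_le_iff)
  then show ?thesis unfolding mc_error_prob_def using Suc by simp
qed

end


context ssm_par
begin

lemma gfun_bound:
  assumes L: "1 \<le> L"
  shows "gfun L - 1 \<le> \<eta> + (1 - c_a / C_a / 2) * (L - 1)"
proof -
  define r where "r = c_a / C_a"
  have r: "0 < r" "r \<le> 1" using r_bounds unfolding r_def by auto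
  have e: "\<eta> \<le> r / 2" using eta_r unfolding r_def by simp
  have "(1 + \<eta>) * (1 - r) \<le> (1 + r / 2) * (1 - r)" using e r by (intro mult_right_mono) auto
  also have "\<dots> \<le> 1 - r / 2" using r by (simp add: algebra_simps)
  finally have k: "(1 + \<eta>) * (1 - r) \<le> 1 - r / 2" .
  have "(1 + \<eta>) * (1 - r) * (L - 1) \<le> (1 - r / 2) * (L - 1)" using k L by (intro mult_right_mono) auto
  moreover have "gfun L - 1 = \<eta> + (1 + \<eta>) * (1 - r) * (L - 1)"
    unfolding gfun_def r_def by (simp add: algebra_simps)
  ultimately show ?thesis unfolding r_def by simp
qed

lemma Lseq_bound:
  "Lseq k - 1 \<le> 2 * \<eta> / (c_a / C_a) + (1 - c_a / C_a / 2) ^ k * ((C_a / c_a)\<^sup>2 - 1)"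
proof (induction k)
  case 0
  have "0 \<le> 2 * \<eta> / (c_a / C_a)" by (intro divide_nonneg_pos) (use eta_pos r_bounds in auto)
  then show ?case by (simp add: Lseq_def)
next
  case (Suc k)
  define r where "r = c_a / C_a"
  have r: "0 < r" "r \<le> 1" using r_bounds unfolding r_def by auto
  have k0: "0 \<le> 1 - r / 2" using r by simp
  have "Lseq (Suc k) - 1 \<le> \<eta> + (1 - r / 2) * (Lseq k - 1)"
    unfolding Lseq_Suc r_def by (rule gfun_bound[OF Lseq_ge1])
  also have "\<dots> \<le> \<eta> + (1 - r / 2) * (2 * \<eta> / r + (1 - r / 2) ^ k * ((C_a / c_a)\<^sup>2 - 1))"
    using Suc k0 unfolding r_def by (intro add_left_mono mult_left_mono) auto
  also have "\<dots> = 2 * \<eta> / r + (1 - r / 2) ^ Suc k * ((C_a / c_a)\<^sup>2 - 1)"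
  proof -
    define w where "w = 2 * \<eta> / r"
    define q where "q = (1 - r / 2) ^ k"
    define D' where "D' = (C_a / c_a)\<^sup>2 - 1"
    have e1: "(1 - r / 2) * w = w - \<eta>" using r unfolding w_def by (simp add: field_simps)
    have "\<eta> + (1 - r / 2) * (w + q * D') = \<eta> + (1 - r / 2) * w + ((1 - r / 2) * q) * D'"
      by (simp add: algebra_simps)
    also have "\<dots> = w + ((1 - r / 2) * q) * D'" using e1 by simp
    finally show ?thesis unfolding w_def q_def D'_def by simp
  qed
  finally show ?case unfolding r_def .
qed

end

context ssm
begin

lemma cover:
  assumes compact_E: "compact (UNIV :: 'a set)"
    and cond_iii: "\<forall>e>0. \<exists>\<delta>>0. \<forall>x x'. dist x x' < \<delta> \<longrightarrow>
                    (\<forall>x''. \<bar>a x x'' - a x' x''\<bar> / h x'' \<le> e)"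
    and e: "0 < e"
  obtains K :: nat and B :: "nat \<Rightarrow> 'a set" and z :: "nat \<Rightarrow> 'a" where "\<And>k. B k \<in> sets borel" "\<And>x. (\<Sum>k<K. indicator (B k) x :: real) = 1"
    "\<And>k x' x. k < K \<Longrightarrow> x' \<in> B k \<Longrightarrow> \<bar>a x' x - a (z k) x\<bar> \<le> e * h x"
proof -
  obtain \<delta> where \<delta>: "\<delta> > 0" "\<And>x x' x''. dist x x' < \<delta> \<Longrightarrow> \<bar>a x x'' - a x' x''\<bar> / h x'' \<le> e"
    using cond_iii e by blast
  have cov: "UNIV \<subseteq> (\<Union>c\<in>UNIV. ball c \<delta>)" using \<delta>(1) by auto
  have op: "\<And>c. c \<in> UNIV \<Longrightarrow> open (ball c \<delta>)" by simp
  have "\<forall>\<epsilon>>0. \<exists>k. finite k \<and> (UNIV::'a set) \<subseteq> (\<Union>x\<in>k. ball x \<epsilon>)"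
    using compact_E unfolding compact_eq_totally_bounded by blast
  then have "\<exists>T::'a set. finite T \<and> UNIV \<subseteq> (\<Union>c\<in>T. ball c \<delta>)" using \<delta>(1) by blast
  then obtain T :: "'a set" where T0: "finite T \<and> UNIV \<subseteq> (\<Union>c\<in>T. ball c \<delta>)" ..
  have T: "finite T" "UNIV \<subseteq> (\<Union>c\<in>T. ball c \<delta>)" using T0 by auto
  obtain xs where xs: "set xs = T" using finite_list[OF T(1)] by blast
  define K where "K = length xs"
  define z where "z k = xs ! k" for k
  define B where "B k = ball (z k) \<delta> - (\<Union>i<k. ball (z i) \<delta>)" for k
  show ?thesis
  proof (rule that[of B K z])
    show "B k \<in> sets borel" for k unfolding B_def
      by (intro sets.Diff sets.finite_UN) auto
  next
    fix x
    have ex: "\<exists>k. k < K \<and> x \<in> ball (z k) \<delta>"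
    proof -
      obtain t where t: "t \<in> T" "x \<in> ball t \<delta>" using T(2) by blast
      from t(1) xs have "t \<in> set xs" by simp
      then obtain k where "k < length xs" "xs ! k = t" by (auto simp: in_set_conv_nth)
      then show ?thesis using t unfolding K_def z_def by blast
    qed
    define k0 where "k0 = (LEAST k. k < K \<and> x \<in> ball (z k) \<delta>)"
    have k0: "k0 < K" "x \<in> ball (z k0) \<delta>"
      using LeastI_ex[OF ex] unfolding k0_def by auto
    have nk: "x \<notin> ball (z i) \<delta>" if i: "i < k0" for i
    proof -
      have "\<not> (i < K \<and> x \<in> ball (z i) \<delta>)" using i unfolding k0_def by (rule not_less_Least)
      then show ?thesis using i k0(1) by auto
    qed
    have "x \<in> B k \<longleftrightarrow> k = k0" if k: "k < K" for k
    proof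
      assume xB: "x \<in> B k"
      then have "x \<in> ball (z k) \<delta>" unfolding B_def by auto
      then have "k0 \<le> k" using k unfolding k0_def by (simp add: Least_le)
      moreover have "\<not> k0 < k" using xB k0(2) unfolding B_def by auto
      ultimately show "k = k0" by simp
    next
      assume "k = k0" then show "x \<in> B k" using k0 nk unfolding B_def by auto
    qed
    then have "(\<Sum>k<K. indicator (B k) x :: real) = (\<Sum>k<K. if k = k0 then 1 else 0)"
      by (intro sum.cong) (auto simp: indicator_def)
    also have "\<dots> = 1" using k0(1) by simp
    finally show "(\<Sum>k<K. indicator (B k) x :: real) = 1" .
  next
    fix k x' x assume k: "k < K" and x': "x' \<in> B k"
    then have d: "dist x' (z k) < \<delta>" unfolding B_def by (auto simp: dist_commute)
    show "\<bar>a x' x - a (z k) x\<bar> \<le> e * h x"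
    proof (cases "h x = 0")
      case True
      then have "a x' x = 0" "a (z k) x = 0" using cond_i[of x x'] cond_i[of x "z k"] ca_bounds by auto
      then show ?thesis using True by simp
    next
      case False
      then have hp: "0 < h x" using h_nonneg[of x] by simp
      have "\<bar>a x' x - a (z k) x\<bar> / h x \<le> e" by (rule \<delta>(2)[OF d])
      then show ?thesis using hp by (simp add: divide_le_eq mult.commute)
    qed
  qed
qed

end

theorem theorem3:
  fixes \<mu> :: "'a::polish_space measure" and \<nu> :: "'b measure"
    and a0 h :: "'a \<Rightarrow> real" and a :: "'a \<Rightarrow> 'a \<Rightarrow> real"
    and b :: "nat \<Rightarrow> 'a \<Rightarrow> 'b \<Rightarrow> real" and y :: "nat \<Rightarrow> 'b"
    and c_a C_a :: real
  assumes compact_E: "compact (UNIV :: 'a set)"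
    and sets_mu: "sets \<mu> = sets borel"
    and sigma_finite_mu: "sigma_finite_measure \<mu>"
    and a0_meas: "a0 \<in> borel_measurable borel"
    and a0_nonneg: "\<And>x. 0 \<le> a0 x"
    and a0_prob: "(\<integral>\<^sup>+ x. ennreal (a0 x) \<partial>\<mu>) = 1"
    and a_meas: "(\<lambda>z. a (fst z) (snd z)) \<in> borel_measurable (borel \<Otimes>\<^sub>M borel)"
    and a_nonneg: "\<And>x' x. 0 \<le> a x' x"
    and a_prob: "\<And>x'. (\<integral>\<^sup>+ x. ennreal (a x' x) \<partial>\<mu>) = 1"
    and b_meas: "\<And>t. (\<lambda>z. b t (fst z) (snd z)) \<in> borel_measurable (borel \<Otimes>\<^sub>M \<nu>)"
    and b_nonneg: "\<And>t x v. 0 \<le> b t x v"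
    and b_prob: "\<And>t x. t \<ge> 1 \<Longrightarrow> (\<integral>\<^sup>+ v. ennreal (b t x v) \<partial>\<nu>) = 1"
    and y_in: "\<And>t. y t \<in> space \<nu>"
    and h_meas: "h \<in> borel_measurable borel"
    and h_nonneg: "\<And>x. 0 \<le> h x"
    and h_prob: "(\<integral>\<^sup>+ x. ennreal (h x) \<partial>\<mu>) = 1"
    and ca_bounds: "0 < c_a" "c_a \<le> C_a"
    and cond_i: "\<And>x' x. c_a * h x \<le> a x' x \<and> a x' x \<le> C_a * h x"
    and cond_ii: "\<And>t v. t \<ge> 1 \<Longrightarrow> v \<in> space \<nu> \<Longrightarrow>
                    0 < (\<integral>\<^sup>+ x. ennreal (b t x v * h x) \<partial>\<mu>) \<and>
                    (\<integral>\<^sup>+ x. ennreal (b t x v * h x) \<partial>\<mu>) < \<infinity>"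
    and cond_iii: "\<forall>e>0. \<exists>\<delta>>0. \<forall>x x'. dist x x' < \<delta> \<longrightarrow>
                    (\<forall>x''. \<bar>a x x'' - a x' x''\<bar> / h x'' \<le> e)"
  shows "\<forall>\<epsilon>>0. \<exists>c1 c2::real. c2 > 0 \<and>
           (\<forall>t N. N \<ge> 1 \<longrightarrow> mc_error_prob \<mu> a0 a b y N t \<epsilon> \<le> c1 * exp (- c2 * real N))"
proof -
  have S: "ssm \<mu> \<nu> a0 h a b y c_a C_a"
    by (rule ssm.intro) (fact assms)+
  interpret ssm \<mu> \<nu> a0 h a b y c_a C_a by (rule S)
  show ?thesis
  proof (intro allI impI)
    fix \<epsilon> :: real assume eps: "0 < \<epsilon>"
    define r where "r = c_a / C_a"
    have r: "0 < r" "r \<le> 1" using ca_bounds C_pos unfolding r_def by auto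
    define \<eta> where "\<eta> = min (r / 2) (\<epsilon> * r / 4)"
    have "0 < \<epsilon> * r / 4" using r eps by simp
    then have eta1: "0 < \<eta>" using r unfolding \<eta>_def by simp
    have eta2': "\<eta> \<le> c_a / C_a / 2" unfolding \<eta>_def r_def by simp
    note eta = eta1 eta2'
    have eta2: "2 * \<eta> / r \<le> \<epsilon> / 2"
    proof -
      have "\<eta> \<le> \<epsilon> * r / 4" unfolding \<eta>_def by simp
      then have "2 * \<eta> \<le> \<epsilon> / 2 * r" by simp
      then show ?thesis using r by (simp add: divide_le_eq)
    qed
    define e where "e = c_a * \<eta> / 16"
    have e: "0 < e" using eta ca_bounds unfolding e_def by simp
    have "\<exists>(K::nat) (B::nat \<Rightarrow> 'a set) (z::nat \<Rightarrow> 'a). (\<forall>k. B k \<in> sets borel) \<and> (\<forall>x. (\<Sum>k<K. indicator (B k) x :: real) = 1) \<and>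
      (\<forall>k x' x. k < K \<longrightarrow> x' \<in> B k \<longrightarrow> \<bar>a x' x - a (z k) x\<bar> \<le> e * h x)"
      by (rule cover[OF compact_E cond_iii e]) blast
    then obtain K :: nat where "\<exists>(B::nat \<Rightarrow> 'a set) (z::nat \<Rightarrow> 'a). (\<forall>k. B k \<in> sets borel) \<and> (\<forall>x. (\<Sum>k<K. indicator (B k) x :: real) = 1) \<and> (\<forall>k x' x. k < K \<longrightarrow> x' \<in> B k \<longrightarrow> \<bar>a x' x - a (z k) x\<bar> \<le> e * h x)" ..
    then obtain B :: "nat \<Rightarrow> 'a set" where "\<exists>(z::nat \<Rightarrow> 'a). (\<forall>k. B k \<in> sets borel) \<and> (\<forall>x. (\<Sum>k<K. indicator (B k) x :: real) = 1) \<and> (\<forall>k x' x. k < K \<longrightarrow> x' \<in> B k \<longrightarrow> \<bar>a x' x - a (z k) x\<bar> \<le> e * h x)" ..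
    then obtain z :: "nat \<Rightarrow> 'a" where cov0: "(\<forall>k. B k \<in> sets borel) \<and> (\<forall>x. (\<Sum>k<K. indicator (B k) x :: real) = 1) \<and> (\<forall>k x' x. k < K \<longrightarrow> x' \<in> B k \<longrightarrow> \<bar>a x' x - a (z k) x\<bar> \<le> e * h x)" ..
    have cov: "\<And>k. B k \<in> sets borel" "\<And>x. (\<Sum>k<K. indicator (B k) x :: real) = 1"
      "\<And>k x' x. k < K \<Longrightarrow> x' \<in> B k \<Longrightarrow> \<bar>a x' x - a (z k) x\<bar> \<le> e * h x"
      using cov0 by auto
    define Q where "Q = (real K + 1) * C_a"
    have Qp: "0 < Q" using C_pos unfolding Q_def by simp
    define \<theta> where "\<theta> = c_a * \<eta> / (8 * Q)"
    have th: "0 < \<theta>" using eta ca_bounds Qp unfolding \<theta>_def by simp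
    have small: "2 * e + real K * C_a * \<theta> \<le> c_a * \<eta> / 4"
    proof -
      have nz: "real K + 1 \<noteq> 0" "C_a \<noteq> 0" using C_pos by auto
      have "real K * (C_a * \<theta>) \<le> (real K + 1) * (C_a * \<theta>)"
        using C_pos th by (intro mult_right_mono) auto
      also have "(real K + 1) * (C_a * \<theta>) = Q * \<theta>" unfolding Q_def by (simp add: mult.assoc)
      also have "Q * \<theta> = c_a * \<eta> / 8" using Qp unfolding \<theta>_def by (simp add: field_simps)
      finally have "real K * C_a * \<theta> \<le> c_a * \<eta> / 8" by (simp add: mult.assoc)
      moreover have "2 * e = c_a * \<eta> / 8" unfolding e_def by simp
      ultimately show ?thesis by linarith
    qed
    define \<kappa> where "\<kappa> = 1 - c_a / C_a / 2"
    have ka: "0 \<le> \<kappa>" "\<kappa> < 1" using r unfolding \<kappa>_def r_def by auto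
    define D where "D = (C_a / c_a)\<^sup>2 - 1"
    have D: "0 \<le> D" using ca_bounds unfolding D_def by (simp add: one_le_power)
    obtain Kst where Kst: "\<kappa> ^ Kst < \<epsilon> / (2 * (D + 1))"
      using real_arch_pow_inv[of "\<epsilon> / (2 * (D + 1))" \<kappa>] eps D ka by auto
    have KD: "\<kappa> ^ Kst * D \<le> \<epsilon> / 2"
    proof -
      have "\<kappa> ^ Kst * D \<le> \<kappa> ^ Kst * (D + 1)" using ka by (intro mult_left_mono) auto
      also have "\<dots> \<le> \<epsilon> / (2 * (D + 1)) * (D + 1)"
        using Kst D by (intro mult_right_mono) auto
      also have "\<dots> = \<epsilon> / 2"
      proof -
        have "D + 1 \<noteq> 0" "2 * D + 2 \<noteq> 0" using D by auto
        then show ?thesis by (simp add: field_simps)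
      qed
      finally show ?thesis .
    qed
    show "\<exists>c1 c2::real. c2 > 0 \<and>
           (\<forall>t N. N \<ge> 1 \<longrightarrow> mc_error_prob \<mu> a0 a b y N t \<epsilon> \<le> c1 * exp (- c2 * real N))"
    proof (rule exI[of _ "real Kst * (real K * 2)"], rule exI[of _ "2 * \<theta>\<^sup>2"], intro conjI allI impI)
      show "0 < 2 * \<theta>\<^sup>2" using th by simp
      fix t N :: nat assume N: "1 \<le> N"
      interpret P: ssm_par \<mu> \<nu> a0 h a b y c_a C_a N K B z e \<theta> \<eta>
        by (intro ssm_par.intro S ssm_par_axioms.intro N cov e th eta small) (use e in auto)
      have "P.Lseq Kst - 1 \<le> 2 * \<eta> / r + \<kappa> ^ Kst * D"
        using P.Lseq_bound[of Kst] unfolding r_def \<kappa>_def D_def .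
      also have "\<dots> \<le> \<epsilon>" using eta2 KD by simp
      finally have "mc_error_prob \<mu> a0 a b y N t \<epsilon> \<le> real Kst * P.beta"
        by (rule P.final_bound[OF eps])
      also have "\<dots> = real Kst * (real K * 2) * exp (- (2 * \<theta>\<^sup>2) * real N)"
        unfolding P.beta_def by (simp add: mult_ac)
      finally show "mc_error_prob \<mu> a0 a b y N t \<epsilon> \<le> real Kst * (real K * 2) * exp (- (2 * \<theta>\<^sup>2) * real N)" .
    qed
  qed
qed


end
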